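(* Let $\mathcal{C}_W$, $R=\mathrm{Spec}(C^\infty(\mathbb{R}))$ and $H=\mathrm{Spec}(C^\infty[0,\infty))$ be as in the context, with the monomorphism $H\rightarrowtail R$ induced by the quotient $C^\infty(\mathbb{R})\to C^\infty[0,\infty)$, and let $\Gamma=\mathcal{C}_W(\mathbf{1},-):\mathcal{C}_W\to\mathbf{Set}$ be the points functor, so that $\Gamma R=\mathbb{R}$ and $\Gamma H=[0,\infty)$. Then for every morphism $v:X\to R$ in $\mathcal{C}_W$, $v$ factors through $H\rightarrowtail R$ if and only if $\Gamma v:\Gamma X\to\Gamma R=\mathbb{R}$ factors through $[0,\infty)\subseteq\mathbb{R}$.
   Context: A $C^\infty$-ring is a model of the algebraic theory whose $n$-ary operations are the smooth functions $\mathbb{R}^n\to\mathbb{R}$. $\mathrm{Aff}_{C^\infty}$ is the opposite of the category of finitely generated $C^\infty$-rings, with $\mathrm{Spec}\,A$ denoting $A$ as an object there; its terminal object is $\mathbf{1}=\mathrm{Spec}\,\mathbb{R}$, so points of $\mathrm{Spec}\,A$ are $C^\infty$-homomorphisms $A\to\mathbb{R}$. $\mathcal{C}$ is the full subcategory of objects $\mathrm{Spec}\,A$ with $A$ having exactly two idempotents and at least one point. A Weil algebra is a finite-dimensional $\mathbb{R}$-algebra $\mathbb{R}\oplus N$ with $N$ nilpotent. A $C^\infty$-ring $A$ is W-determined if the family of all $C^\infty$-homomorphisms $A\to W$ with $W$ a Weil algebra is jointly monic. $\mathcal{C}_W$ is the full subcategory of $\mathcal{C}$ of the $\mathrm{Spec}\,A$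 with $A$ W-determined. $C^\infty[0,\infty)=C^\infty(\mathbb{R})/I$ with $I$ the ideal of smooth functions vanishing on $[0,\infty)$; $H$ is an object of $\mathcal{C}_W$. *)

theory Defs
  imports "HOL-Analysis.Analysis"
begin

(* Smooth functions R^n -> R, represented as functions (nat => real) => real that depend
   only on the first n coordinates.  nat => real carries the product topology. *)

fun Ck :: "nat \<Rightarrow> nat \<Rightarrow> ((nat \<Rightarrow> real) \<Rightarrow> real) \<Rightarrow> bool" where
  "Ck 0 n f = continuous_on UNIV f"
| "Ck (Suc k) n f =
     (continuous_on UNIV f \<and>
      (\<forall>i<n. \<forall>x. (\<lambda>t. f (x(i := t))) differentiable (at (x i))) \<and>
      (\<forall>i<n. Ck k n (\<lambda>x. deriv (\<lambda>t. f (x(i := t))) (x i))))"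

definition smooth_fun :: "nat \<Rightarrow> ((nat \<Rightarrow> real) \<Rightarrow> real) \<Rightarrow> bool" where
  "smooth_fun n f \<longleftrightarrow>
     (\<forall>x. f x = f (\<lambda>i. if i < n then x i else 0)) \<and> (\<forall>k. Ck k n f)"

type_synonym 'a cops = "nat \<Rightarrow> ((nat \<Rightarrow> real) \<Rightarrow> real) \<Rightarrow> (nat \<Rightarrow> 'a) \<Rightarrow> 'a"

definition cinf_ring :: "'a set \<Rightarrow> 'a cops \<Rightarrow> bool" where
  "cinf_ring A \<Phi> \<longleftrightarrow>
     (\<forall>n f a. smooth_fun n f \<and> (\<forall>i<n. a i \<in> A) \<longrightarrow> \<Phi> n f a \<in> A) \<and>
     (\<forall>n f a b. smooth_fun n f \<and> (\<forall>i<n. a i = b i) \<longrightarrow> \<Phi> n f a = \<Phi> n f b) \<and>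
     (\<forall>n i a. i < n \<and> (\<forall>j<n. a j \<in> A) \<longrightarrow> \<Phi> n (\<lambda>x. x i) a = a i) \<and>
     (\<forall>n m f g a. smooth_fun n f \<and> (\<forall>i<n. smooth_fun m (g i)) \<and> (\<forall>j<m. a j \<in> A) \<longrightarrow>
        \<Phi> n f (\<lambda>i. \<Phi> m (g i) a) = \<Phi> m (\<lambda>x. f (\<lambda>i. g i x)) a)"

definition cinf_hom :: "'a set \<Rightarrow> 'a cops \<Rightarrow> 'b set \<Rightarrow> 'b cops \<Rightarrow> ('a \<Rightarrow> 'b) \<Rightarrow> bool" where
  "cinf_hom A \<Phi> B \<Psi> h \<longleftrightarrow>
     (\<forall>x\<in>A. h x \<in> B) \<and>
     (\<forall>n f a. smooth_fun n f \<and> (\<forall>i<n. a i \<in> A) \<longrightarrow> h (\<Phi> n f a) = \<Psi> n f (\<lambda>i. h (a i)))"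

definition real_ops :: "real cops" where
  "real_ops n f a = f a"

(* points of Spec A = C^infinity-homomorphisms A -> R *)
definition is_point :: "'a set \<Rightarrow> 'a cops \<Rightarrow> ('a \<Rightarrow> real) \<Rightarrow> bool" where
  "is_point A \<Phi> p \<longleftrightarrow> cinf_hom A \<Phi> UNIV real_ops p"

definition fin_gen :: "'a set \<Rightarrow> 'a cops \<Rightarrow> bool" where
  "fin_gen A \<Phi> \<longleftrightarrow> (\<exists>n a. (\<forall>i<n. a i \<in> A) \<and> (\<forall>x\<in>A. \<exists>f. smooth_fun n f \<and> x = \<Phi> n f a))"

definition cmul :: "'a cops \<Rightarrow> 'a \<Rightarrow> 'a \<Rightarrow> 'a" where
  "cmul \<Phi> x y = \<Phi> 2 (\<lambda>z. z 0 * z 1) (\<lambda>i. if i = 0 then x else y)"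

definition cconst :: "'a cops \<Rightarrow> real \<Rightarrow> 'a" where
  "cconst \<Phi> c = \<Phi> 0 (\<lambda>_. c) (\<lambda>_. undefined)"

definition idempotents :: "'a set \<Rightarrow> 'a cops \<Rightarrow> 'a set" where
  "idempotents A \<Phi> = {e \<in> A. cmul \<Phi> e e = e}"

(* Weil algebra: C^infinity-ring whose underlying R-algebra is finite-dimensional
   and of the form R (+) N with N nilpotent.  Carrier inside nat => real (every
   finite-dimensional real vector space embeds there). *)
definition weil :: "(nat \<Rightarrow> real) set \<Rightarrow> (nat \<Rightarrow> real) cops \<Rightarrow> bool" where
  "weil W \<Psi> \<longleftrightarrow> cinf_ring W \<Psi> \<and>
     (\<exists>k b. (\<forall>i<k. b i \<in> W) \<and> (\<forall>w\<in>W. \<exists>c. w = \<Psi> k (\<lambda>x. \<Sum>i<k. c i * x i) b)) \<and>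
     cconst \<Psi> 0 \<noteq> cconst \<Psi> 1 \<and>
     (\<forall>w\<in>W. \<exists>c m. m \<in> W \<and> (\<exists>r. \<Psi> 1 (\<lambda>x. x 0 ^ r) (\<lambda>_. m) = cconst \<Psi> 0) \<and>
                 w = \<Psi> 1 (\<lambda>x. c + x 0) (\<lambda>_. m))"

definition W_determined :: "'a set \<Rightarrow> 'a cops \<Rightarrow> bool" where
  "W_determined A \<Phi> \<longleftrightarrow>
     (\<forall>x\<in>A. \<forall>y\<in>A. x \<noteq> y \<longrightarrow>
        (\<exists>W \<Psi> h. weil W \<Psi> \<and> cinf_hom A \<Phi> W \<Psi> h \<and> h x \<noteq> h y))"

(* Spec A is an object of C_W *)
definition in_CW :: "'a set \<Rightarrow> 'a cops \<Rightarrow> bool" where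
  "in_CW A \<Phi> \<longleftrightarrow> cinf_ring A \<Phi> \<and> fin_gen A \<Phi> \<and> card (idempotents A \<Phi>) = 2 \<and>
     (\<exists>p. is_point A \<Phi> p) \<and> W_determined A \<Phi>"

definition CinfR :: "(real \<Rightarrow> real) set" where
  "CinfR = {g. smooth_fun 1 (\<lambda>x. g (x 0))}"

definition CinfR_ops :: "(real \<Rightarrow> real) cops" where
  "CinfR_ops n f g = (\<lambda>t. f (\<lambda>i. g i t))"

(* C^infinity[0,inf) = C^infinity(R)/I, I = smooth functions vanishing on [0,inf);
   elements are the cosets g + I *)
definition qH :: "(real \<Rightarrow> real) \<Rightarrow> (real \<Rightarrow> real) set" where
  "qH g = {h \<in> CinfR. \<forall>t\<ge>0. h t - g t = 0}"

definition CinfH :: "(real \<Rightarrow> real) set set" where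
  "CinfH = qH ` CinfR"

definition CinfH_ops :: "(real \<Rightarrow> real) set cops" where
  "CinfH_ops n f c = qH (CinfR_ops n f (\<lambda>i. SOME g. g \<in> CinfR \<and> c i = qH g))"

end

theory Submission
  imports Defs "HOL-Computational_Algebra.Polynomial"
begin


definition restr :: "nat \<Rightarrow> (nat \<Rightarrow> real) \<Rightarrow> nat \<Rightarrow> real" where
  "restr n x = (\<lambda>i. if i < n then x i else 0)"

definition pd :: "nat \<Rightarrow> ((nat \<Rightarrow> real) \<Rightarrow> real) \<Rightarrow> (nat \<Rightarrow> real) \<Rightarrow> real" where
  "pd i f = (\<lambda>x. deriv (\<lambda>t. f (x(i := t))) (x i))"

lemma Ck_Suc_iff: "Ck (Suc k) n f \<longleftrightarrow> continuous_on UNIV f \<and>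
      (\<forall>i<n. \<forall>x. (\<lambda>t. f (x(i := t))) differentiable (at (x i))) \<and> (\<forall>i<n. Ck k n (pd i f))"
  by (simp add: pd_def)

lemma Ck_cont: "Ck k n f \<Longrightarrow> continuous_on UNIV f"
  by (cases k) auto

lemma Ck_mono: "Ck (Suc k) n f \<Longrightarrow> Ck k n f"
proof (induction k arbitrary: f)
  case 0 then show ?case by simp
next
  case (Suc k) then show ?case by (simp add: Ck_Suc_iff del: Ck.simps) 
qed

lemma Ck_le: "Ck k' n f \<Longrightarrow> k \<le> k' \<Longrightarrow> Ck k n f"
proof (induction k')
  case 0 then show ?case by simp
next
  case (Suc k')
  then show ?case using Ck_mono le_Suc_eq by blast
qed


lemma Ck_DERIV:
  assumes "Ck (Suc k) n f" "i < n"
  shows "((\<lambda>t. f (x(i := t))) has_real_derivative pd i f (x(i := s))) (at s)"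
proof -
  have "\<forall>x. (\<lambda>t. f (x(i := t))) differentiable (at (x i))"
    using assms by (simp add: Ck_Suc_iff del: Ck.simps)
  then have "(\<lambda>t. f ((x(i := s))(i := t))) differentiable (at ((x(i := s)) i))"
    by blast
  then have "(\<lambda>t. f (x(i := t))) differentiable (at s)"
    by (simp only: fun_upd_upd fun_upd_same)
  then have "((\<lambda>t. f (x(i := t))) has_real_derivative deriv (\<lambda>t. f (x(i := t))) s) (at s)"
    by (simp only: DERIV_deriv_iff_real_differentiable)
  moreover have "pd i f (x(i := s)) = deriv (\<lambda>t. f (x(i := t))) s"
    unfolding pd_def by (simp only: fun_upd_upd fun_upd_same)
  ultimately show ?thesis by simp
qed

lemma DERIV_pd:
  assumes "\<And>s. ((\<lambda>t. f (x(i := t))) has_real_derivative D s) (at s)"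
  shows "pd i f x = D (x i)"
  unfolding pd_def by (rule DERIV_imp_deriv) (use assms in auto)

lemma diff_from_DERIV:
  assumes "\<And>x. \<exists>D. ((\<lambda>t. f (x(i := t))) has_real_derivative D) (at (x i))"
  shows "\<forall>x. (\<lambda>t. f (x(i := t))) differentiable (at (x i))"
  using assms real_differentiable_def by blast

lemma Ck_SucI:
  assumes "continuous_on UNIV f"
    and "\<And>i x s. i < n \<Longrightarrow> ((\<lambda>t. f (x(i := t))) has_real_derivative D i (x(i := s))) (at s)"
    and "\<And>i. i < n \<Longrightarrow> Ck k n (D i)"
  shows "Ck (Suc k) n f"
proof -
  have pdD: "pd i f = D i" if "i < n" for i
  proof
    fix x
    have "pd i f x = D i (x(i := x i))"
      by (rule DERIV_pd[where D="\<lambda>s. D i (x(i := s))"]) (use assms(2) that in auto)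
    then show "pd i f x = D i x" by simp
  qed
  show ?thesis
    unfolding Ck_Suc_iff
  proof (intro conjI allI impI)
    fix i x assume "i < n"
    show "(\<lambda>t. f (x(i := t))) differentiable (at (x i))"
      using assms(2)[OF \<open>i < n\<close>, of x "x i"] real_differentiable_def by auto
  next
    fix i assume "i < n"
    then show "Ck k n (pd i f)" using pdD assms(3) by simp
  qed (fact assms(1))
qed

lemma Ck_const: "Ck k n (\<lambda>_. c)"
proof (induction k arbitrary: c)
  case 0 then show ?case by simp
next
  case (Suc k)
  show ?case by (rule Ck_SucI[where D="\<lambda>i x. 0"]) (auto intro: Suc)
qed

lemma Ck_proj: "Ck k n (\<lambda>x. x j)"
proof (cases k)
  case 0 then show ?thesis by simp
next
  case (Suc k')
  show ?thesis unfolding Suc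
    by (rule Ck_SucI[where D="\<lambda>i x. if i = j then 1 else 0"])
       (auto intro!: derivative_eq_intros Ck_const simp: continuous_on_product_coordinates)
qed

lemma Ck_add:
  assumes "Ck k n f" "Ck k n g" shows "Ck k n (\<lambda>x. f x + g x)"
  using assms
proof (induction k arbitrary: f g)
  case 0 then show ?case by (auto intro: continuous_intros)
next
  case (Suc k)
  show ?case
  proof (rule Ck_SucI[where D="\<lambda>i x. pd i f x + pd i g x"])
    show "continuous_on UNIV (\<lambda>x. f x + g x)"
      using Ck_cont[OF Suc.prems(1)] Ck_cont[OF Suc.prems(2)] by (auto intro: continuous_intros)
  next
    fix i x s assume "i < n"
    show "((\<lambda>t. f (x(i := t)) + g (x(i := t))) has_real_derivative pd i f (x(i := s)) + pd i g (x(i := s))) (at s)"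
      by (rule DERIV_add[OF Ck_DERIV[OF Suc.prems(1) \<open>i < n\<close>] Ck_DERIV[OF Suc.prems(2) \<open>i < n\<close>]])
  next
    fix i assume "i < n"
    then show "Ck k n (\<lambda>x. pd i f x + pd i g x)"
      using Suc.IH Suc.prems by (simp add: Ck_Suc_iff del: Ck.simps)
  qed
qed

lemma Ck_mult:
  assumes "Ck k n f" "Ck k n g" shows "Ck k n (\<lambda>x. f x * g x)"
  using assms
proof (induction k arbitrary: f g)
  case 0 then show ?case by (auto intro: continuous_intros)
next
  case (Suc k)
  show ?case
  proof (rule Ck_SucI[where D="\<lambda>i x. pd i f x * g x + f x * pd i g x"])
    show "continuous_on UNIV (\<lambda>x. f x * g x)"
      using Ck_cont[OF Suc.prems(1)] Ck_cont[OF Suc.prems(2)] by (auto intro: continuous_intros)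
  next
    fix i x s assume "i < n"
    show "((\<lambda>t. f (x(i := t)) * g (x(i := t))) has_real_derivative pd i f (x(i := s)) * g (x(i := s)) + f (x(i := s)) * pd i g (x(i := s))) (at s)"
      by (rule DERIV_cong[OF DERIV_mult[OF Ck_DERIV[OF Suc.prems(1) \<open>i < n\<close>] Ck_DERIV[OF Suc.prems(2) \<open>i < n\<close>]]]) (simp add: algebra_simps fun_upd_def)
  next
    fix i assume "i < n"
    have "Ck k n f" "Ck k n g" using Suc.prems Ck_mono by blast+
    then show "Ck k n (\<lambda>x. pd i f x * g x + f x * pd i g x)"
      using Suc.IH Suc.prems \<open>i < n\<close> Ck_add by (simp add: Ck_Suc_iff del: Ck.simps)
  qed
qed

lemma Ck_sum:
  assumes "\<And>j. j \<in> J \<Longrightarrow> Ck k n (f j)" shows "Ck k n (\<lambda>x. \<Sum>j\<in>J. f j x)"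
  using assms
proof (induction J rule: infinite_finite_induct)
  case (infinite A) then show ?case by (simp add: Ck_const)
next
  case empty then show ?case by (simp add: Ck_const)
next
  case (insert a A) then show ?case by (simp add: Ck_add)
qed

lemma Ck_inverse:
  assumes "Ck k n f" "\<And>x. f x \<noteq> 0" shows "Ck k n (\<lambda>x. inverse (f x))"
  using assms
proof (induction k arbitrary: f)
  case 0 then show ?case by (auto intro!: continuous_on_inverse)
next
  case (Suc k)
  show ?case
  proof (rule Ck_SucI[where D="\<lambda>i x. - (pd i f x * (inverse (f x) * inverse (f x)))"])
    show "continuous_on UNIV (\<lambda>x. inverse (f x))"
      using Ck_cont[OF Suc.prems(1)] Suc.prems(2) by (auto intro!: continuous_on_inverse)
  next
    fix i x s assume "i < n"
    show "((\<lambda>t. inverse (f (x(i := t)))) has_real_derivative - (pd i f (x(i := s)) * (inverse (f (x(i := s))) * inverse (f (x(i := s)))))) (at s)"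
      by (rule DERIV_cong[OF DERIV_inverse_fun[OF Ck_DERIV[OF Suc.prems(1) \<open>i < n\<close>] Suc.prems(2)]])
         (simp only: power_Suc power_0 mult_1_right inverse_mult_distrib)
  next
    fix i assume "i < n"
    have "Ck k n f" using Suc.prems Ck_mono by blast
    then have inv: "Ck k n (\<lambda>x. inverse (f x))" using Suc.IH Suc.prems(2) by blast
    have pdf: "Ck k n (pd i f)" using Suc.prems \<open>i < n\<close> by (simp add: Ck_Suc_iff del: Ck.simps)
    have "Ck k n (\<lambda>x. (-1) * (pd i f x * (inverse (f x) * inverse (f x))))"
      by (rule Ck_mult[OF Ck_const Ck_mult[OF pdf Ck_mult[OF inv inv]]])
    then show "Ck k n (\<lambda>x. - (pd i f x * (inverse (f x) * inverse (f x))))" by simp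
  qed
qed


lemma tendsto_coordI:
  fixes X :: "'a \<Rightarrow> nat \<Rightarrow> real"
  assumes "\<And>i. ((\<lambda>t. X t i) \<longlongrightarrow> L i) F"
  shows "(X \<longlongrightarrow> L) F"
proof -
  have "limitin (product_topology (\<lambda>_. euclidean) UNIV) X L F"
    unfolding limitin_componentwise using assms by simp
  then show ?thesis by (simp add: euclidean_product_topology)
qed

lemma mvt_abs:
  fixes g :: "real \<Rightarrow> real"
  assumes "\<And>s. (g has_real_derivative g' s) (at s)"
  shows "\<exists>z. \<bar>z - a\<bar> \<le> \<bar>b - a\<bar> \<and> g b - g a = (b - a) * g' z"
proof (cases a b rule: linorder_cases)
  case less
  from MVT2[OF less, of g g'] assms obtain z where "a < z" "z < b" "g b - g a = (b - a) * g' z" by blast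
  then show ?thesis by (intro exI[of _ z]) auto
next
  case equal then show ?thesis by auto
next
  case greater
  from MVT2[OF greater, of g g'] assms obtain z where "b < z" "z < a" "g a - g b = (a - b) * g' z" by blast
  then show ?thesis by (intro exI[of _ z]) (auto simp: algebra_simps)
qed

definition Yc :: "(real \<Rightarrow> nat \<Rightarrow> real) \<Rightarrow> real \<Rightarrow> nat \<Rightarrow> real \<Rightarrow> nat \<Rightarrow> real" where
  "Yc \<gamma> tz l t = (\<lambda>i. if i < l then \<gamma> t i else \<gamma> tz i)"

lemma Ck_cont_pd:
  assumes "Ck (Suc k) n f" "i < n" shows "isCont (pd i f) x"
proof -
  have "Ck k n (pd i f)" using assms by (simp add: Ck_Suc_iff del: Ck.simps)
  then have "continuous_on UNIV (pd i f)" by (rule Ck_cont)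
  then show ?thesis by (simp add: continuous_on_eq_continuous_at)
qed

lemma chain_step:
  fixes f :: "(nat \<Rightarrow> real) \<Rightarrow> real" and \<gamma> :: "real \<Rightarrow> nat \<Rightarrow> real"
  assumes C1: "Ck (Suc k) n f" and j: "j < n"
    and d\<gamma>: "((\<lambda>t. \<gamma> t j) has_real_derivative \<gamma>' j) (at tz)"
    and c\<gamma>: "\<And>i. i < j \<Longrightarrow> isCont (\<lambda>t. \<gamma> t i) tz"
  shows "((\<lambda>t. f (Yc \<gamma> tz (Suc j) t) - f (Yc \<gamma> tz j t)) has_real_derivative pd j f (\<gamma> tz) * \<gamma>' j) (at tz)"
proof -
  define D where "D t = f (Yc \<gamma> tz (Suc j) t) - f (Yc \<gamma> tz j t)" for t
  have Ysuc: "Yc \<gamma> tz (Suc j) t = (Yc \<gamma> tz j t)(j := \<gamma> t j)" for t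
    by (auto simp: Yc_def fun_eq_iff)
  have Yj: "Yc \<gamma> tz j t j = \<gamma> tz j" for t by (simp add: Yc_def)
  have "\<exists>z. \<bar>z - \<gamma> tz j\<bar> \<le> \<bar>\<gamma> t j - \<gamma> tz j\<bar> \<and>
      D t = (\<gamma> t j - \<gamma> tz j) * pd j f ((Yc \<gamma> tz j t)(j := z))" for t
  proof -
    have "\<And>s. ((\<lambda>u. f ((Yc \<gamma> tz j t)(j := u))) has_real_derivative pd j f ((Yc \<gamma> tz j t)(j := s))) (at s)"
      by (rule Ck_DERIV[OF C1 j])
    from mvt_abs[OF this, of "\<gamma> tz j" "\<gamma> t j"] obtain z where
      "\<bar>z - \<gamma> tz j\<bar> \<le> \<bar>\<gamma> t j - \<gamma> tz j\<bar>"
      "f ((Yc \<gamma> tz j t)(j := \<gamma> t j)) - f ((Yc \<gamma> tz j t)(j := \<gamma> tz j)) = (\<gamma> t j - \<gamma> tz j) * pd j f ((Yc \<gamma> tz j t)(j := z))"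
      by blast
    moreover have "(Yc \<gamma> tz j t)(j := \<gamma> tz j) = Yc \<gamma> tz j t" using Yj by (metis fun_upd_triv)
    ultimately show ?thesis unfolding D_def Ysuc by auto
  qed
  then obtain \<xi> where \<xi>: "\<And>t. \<bar>\<xi> t - \<gamma> tz j\<bar> \<le> \<bar>\<gamma> t j - \<gamma> tz j\<bar>"
    "\<And>t. D t = (\<gamma> t j - \<gamma> tz j) * pd j f ((Yc \<gamma> tz j t)(j := \<xi> t))"
    by metis
  have D0: "D tz = 0" unfolding D_def by (simp add: Yc_def)
  have cj: "isCont (\<lambda>t. \<gamma> t j) tz" using d\<gamma> by (rule DERIV_isCont)
  have lim\<xi>: "(\<xi> \<longlongrightarrow> \<gamma> tz j) (at tz)"
  proof -
    have "((\<lambda>t. \<gamma> t j - \<gamma> tz j) \<longlongrightarrow> 0) (at tz)"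
      using cj unfolding isCont_def by (simp add: LIM_zero)
    then have "((\<lambda>t. \<bar>\<gamma> t j - \<gamma> tz j\<bar>) \<longlongrightarrow> 0) (at tz)"
      by (simp add: tendsto_rabs_zero)
    then have "((\<lambda>t. \<xi> t - \<gamma> tz j) \<longlongrightarrow> 0) (at tz)"
      by (rule Lim_null_comparison[rotated]) (use \<xi>(1) in auto)
    then show ?thesis by (simp add: LIM_zero_iff)
  qed
  define Z where "Z t = (Yc \<gamma> tz j t)(j := \<xi> t)" for t
  have limZ: "(Z \<longlongrightarrow> \<gamma> tz) (at tz)"
  proof (rule tendsto_coordI)
    fix i
    consider "i = j" | "i < j" | "i > j" by linarith
    then show "((\<lambda>t. Z t i) \<longlongrightarrow> \<gamma> tz i) (at tz)"
    proof cases
      case 1 then show ?thesis using lim\<xi> by (simp add: Z_def)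
    next
      case 2
      then have "((\<lambda>t. \<gamma> t i) \<longlongrightarrow> \<gamma> tz i) (at tz)" using c\<gamma> isCont_def by blast
      then show ?thesis using 2 by (simp add: Z_def Yc_def)
    next
      case 3 then show ?thesis by (simp add: Z_def Yc_def)
    qed
  qed
  have "((\<lambda>t. pd j f (Z t)) \<longlongrightarrow> pd j f (\<gamma> tz)) (at tz)"
    by (rule isCont_tendsto_compose[OF Ck_cont_pd[OF C1 j] limZ])
  moreover have "((\<lambda>t. (\<gamma> t j - \<gamma> tz j) / (t - tz)) \<longlongrightarrow> \<gamma>' j) (at tz)"
    using d\<gamma> by (simp add: has_field_derivative_iff)
  ultimately have "((\<lambda>t. pd j f (Z t) * ((\<gamma> t j - \<gamma> tz j) / (t - tz))) \<longlongrightarrow> pd j f (\<gamma> tz) * \<gamma>' j) (at tz)"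
    by (rule tendsto_mult)
  moreover have "(D t - D tz) / (t - tz) = pd j f (Z t) * ((\<gamma> t j - \<gamma> tz j) / (t - tz))" for t
    using \<xi>(2)[of t] D0 by (simp add: Z_def)
  ultimately have "((\<lambda>t. (D t - D tz) / (t - tz)) \<longlongrightarrow> pd j f (\<gamma> tz) * \<gamma>' j) (at tz)"
    by (simp only:)
  then have "(D has_real_derivative pd j f (\<gamma> tz) * \<gamma>' j) (at tz)"
    by (simp add: has_field_derivative_iff)
  then show ?thesis unfolding D_def by simp
qed

lemma chain_rule:
  fixes f :: "(nat \<Rightarrow> real) \<Rightarrow> real" and \<gamma> :: "real \<Rightarrow> nat \<Rightarrow> real"
  assumes C1: "Ck (Suc k) n f" and loc: "\<And>x. f x = f (restr n x)"
    and d\<gamma>: "\<And>i. i < n \<Longrightarrow> ((\<lambda>t. \<gamma> t i) has_real_derivative \<gamma>' i) (at tz)"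
  shows "((\<lambda>t. f (\<gamma> t)) has_real_derivative (\<Sum>i<n. pd i f (\<gamma> tz) * \<gamma>' i)) (at tz)"
proof -
  have "l \<le> n \<Longrightarrow> ((\<lambda>t. f (Yc \<gamma> tz l t)) has_real_derivative (\<Sum>i<l. pd i f (\<gamma> tz) * \<gamma>' i)) (at tz)" for l
  proof (induction l)
    case 0
    have "Yc \<gamma> tz 0 t = \<gamma> tz" for t by (simp add: Yc_def fun_eq_iff)
    then show ?case by simp
  next
    case (Suc l)
    have IH: "((\<lambda>t. f (Yc \<gamma> tz l t)) has_real_derivative (\<Sum>i<l. pd i f (\<gamma> tz) * \<gamma>' i)) (at tz)"
      using Suc by simp
    have st: "((\<lambda>t. f (Yc \<gamma> tz (Suc l) t) - f (Yc \<gamma> tz l t)) has_real_derivative pd l f (\<gamma> tz) * \<gamma>' l) (at tz)"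
      by (rule chain_step[OF C1]) (use Suc.prems d\<gamma> in \<open>auto\<close>, meson DERIV_isCont Suc.prems d\<gamma> less_trans Suc_le_lessD)
    have "((\<lambda>t. f (Yc \<gamma> tz l t) + (f (Yc \<gamma> tz (Suc l) t) - f (Yc \<gamma> tz l t))) has_real_derivative
        (\<Sum>i<l. pd i f (\<gamma> tz) * \<gamma>' i) + pd l f (\<gamma> tz) * \<gamma>' l) (at tz)"
      by (rule DERIV_add[OF IH st])
    then show ?case by simp
  qed
  from this[of n] have "((\<lambda>t. f (Yc \<gamma> tz n t)) has_real_derivative (\<Sum>i<n. pd i f (\<gamma> tz) * \<gamma>' i)) (at tz)"
    by simp
  moreover have "f (Yc \<gamma> tz n t) = f (\<gamma> t)" for t
    using loc[of "Yc \<gamma> tz n t"] loc[of "\<gamma> t"] by (simp add: restr_def Yc_def cong: if_cong)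
  ultimately show ?thesis by simp
qed


definition loc :: "nat \<Rightarrow> ((nat \<Rightarrow> real) \<Rightarrow> real) \<Rightarrow> bool" where
  "loc n f \<longleftrightarrow> (\<forall>x. f x = f (restr n x))"

lemma loc_pd: assumes "loc n f" "i < n" shows "loc n (pd i f)"
  unfolding loc_def
proof
  fix x
  have "(\<lambda>t. f (x(i := t))) = (\<lambda>t. f ((restr n x)(i := t)))"
  proof
    fix t
    have "restr n (x(i := t)) = restr n ((restr n x)(i := t))"
      using assms(2) by (auto simp: restr_def fun_eq_iff)
    then show "f (x(i := t)) = f ((restr n x)(i := t))"
      using assms(1) unfolding loc_def by metis
  qed
  moreover have "x i = restr n x i" using assms(2) by (simp add: restr_def)
  ultimately show "pd i f x = pd i f (restr n x)" unfolding pd_def by simp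
qed

lemma cont_comp_restr:
  assumes "loc n f" "continuous_on UNIV f" "\<And>i. i < n \<Longrightarrow> continuous_on UNIV (g i)"
  shows "continuous_on UNIV (\<lambda>x. f (\<lambda>i. g i x))"
proof -
  have c: "continuous_on UNIV (\<lambda>x. (\<lambda>i. if i < n then g i x else 0))"
  proof (rule continuous_on_coordinatewise_then_product)
    fix i show "continuous_on UNIV (\<lambda>x. if i < n then g i x else 0)"
      using assms(3) by (cases "i < n") auto
  qed
  have "continuous_on UNIV (\<lambda>x. f (\<lambda>i. if i < n then g i x else 0))"
    by (rule continuous_on_compose2[OF assms(2) c]) auto
  moreover have "f (\<lambda>i. g i x) = f (\<lambda>i. if i < n then g i x else 0)" for x
    using assms(1) unfolding loc_def restr_def by metis
  ultimately show ?thesis by simp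
qed

theorem Ck_comp:
  assumes "loc n f" "Ck k n f" "\<And>i. i < n \<Longrightarrow> Ck k m (g i)"
  shows "Ck k m (\<lambda>x. f (\<lambda>i. g i x))"
  using assms
proof (induction k arbitrary: f)
  case 0 then show ?case using cont_comp_restr[of n f g] by simp
next
  case (Suc k)
  note C1 = Suc.prems(2)
  show ?case
  proof (rule Ck_SucI[where D="\<lambda>j x. \<Sum>i<n. pd i f (\<lambda>l. g l x) * pd j (g i) x"])
    show "continuous_on UNIV (\<lambda>x. f (\<lambda>i. g i x))"
      using cont_comp_restr[of n f g] Suc.prems Ck_cont by blast
  next
    fix j x s assume "j < m"
    show "((\<lambda>t. f (\<lambda>i. g i (x(j := t)))) has_real_derivative
        (\<Sum>i<n. pd i f (\<lambda>l. g l (x(j := s))) * pd j (g i) (x(j := s)))) (at s)"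
    proof -
      have l: "\<And>x. f x = f (restr n x)" using Suc.prems(1) unfolding loc_def by blast
      have d: "((\<lambda>t. g i (x(j := t))) has_real_derivative pd j (g i) (x(j := s))) (at s)" if "i < n" for i
        by (rule Ck_DERIV[OF Suc.prems(3)[OF that] \<open>j < m\<close>])
      show ?thesis
        using chain_rule[OF C1 l, where \<gamma>="\<lambda>t i. g i (x(j := t))" and tz=s and \<gamma>'="\<lambda>i. pd j (g i) (x(j := s))"] d by simp
    qed
  next
    fix j assume "j < m"
    show "Ck k m (\<lambda>x. \<Sum>i<n. pd i f (\<lambda>l. g l x) * pd j (g i) x)"
    proof (rule Ck_sum, rule Ck_mult)
      fix i assume "i \<in> {..<n}"
      then have i: "i < n" by simp
      show "Ck k m (\<lambda>x. pd i f (\<lambda>l. g l x))"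
      proof (rule Suc.IH)
        show "loc n (pd i f)" using loc_pd Suc.prems(1) i by blast
        show "Ck k n (pd i f)" using C1 i by (simp add: Ck_Suc_iff del: Ck.simps)
        show "Ck k m (g l)" if "l < n" for l using Suc.prems(3)[OF that] Ck_mono by blast
      qed
      show "Ck k m (pd j (g i))" using Suc.prems(3)[OF i] \<open>j < m\<close> by (simp add: Ck_Suc_iff del: Ck.simps)
    qed
  qed
qed


lemma smooth_fun_iff: "smooth_fun n f \<longleftrightarrow> loc n f \<and> (\<forall>k. Ck k n f)"
  by (simp add: smooth_fun_def loc_def restr_def)

theorem smooth_comp:
  assumes "smooth_fun n f" "\<And>i. i < n \<Longrightarrow> smooth_fun m (g i)"
  shows "smooth_fun m (\<lambda>x. f (\<lambda>i. g i x))"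
  unfolding smooth_fun_iff
proof (intro conjI allI)
  fix k show "Ck k m (\<lambda>x. f (\<lambda>i. g i x))"
    using Ck_comp[of n f k m g] assms unfolding smooth_fun_iff by blast
next
  show "loc m (\<lambda>x. f (\<lambda>i. g i x))"
    unfolding loc_def
  proof
    fix x
    have "g i x = g i (restr m x)" if "i < n" for i
      using assms(2)[OF that] unfolding smooth_fun_iff loc_def by blast
    then have "restr n (\<lambda>i. g i x) = restr n (\<lambda>i. g i (restr m x))"
      unfolding restr_def by (auto simp del: fun_upd_apply)
    then show "f (\<lambda>i. g i x) = f (\<lambda>i. g i (restr m x))"
      using assms(1) by (metis smooth_fun_iff loc_def)
  qed
qed

lemma smooth_const: "smooth_fun n (\<lambda>_. c)"
  by (simp add: smooth_fun_iff loc_def Ck_const)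

lemma smooth_proj: "i < n \<Longrightarrow> smooth_fun n (\<lambda>x. x i)"
  by (simp add: smooth_fun_iff loc_def Ck_proj restr_def)

lemma loc_add: assumes "loc n f" "loc n g" shows "loc n (\<lambda>x. f x + g x)"
  unfolding loc_def
proof
  fix x
  from assms have a: "f (restr n x) = f x" and b: "g (restr n x) = g x" unfolding loc_def by metis+
  show "f x + g x = f (restr n x) + g (restr n x)" by (simp only: a b)
qed

lemma loc_mult: assumes "loc n f" "loc n g" shows "loc n (\<lambda>x. f x * g x)"
  unfolding loc_def
proof
  fix x
  from assms have a: "f (restr n x) = f x" and b: "g (restr n x) = g x" unfolding loc_def by metis+
  show "f x * g x = f (restr n x) * g (restr n x)" by (simp only: a b)
qed

lemma loc_inverse: assumes "loc n f" shows "loc n (\<lambda>x. inverse (f x))"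
  unfolding loc_def
proof
  fix x
  from assms have a: "f (restr n x) = f x" unfolding loc_def by metis
  show "inverse (f x) = inverse (f (restr n x))" by (simp only: a)
qed

lemma smooth_add: "smooth_fun n f \<Longrightarrow> smooth_fun n g \<Longrightarrow> smooth_fun n (\<lambda>x. f x + g x)"
  unfolding smooth_fun_iff using loc_add Ck_add by blast

lemma smooth_mult: "smooth_fun n f \<Longrightarrow> smooth_fun n g \<Longrightarrow> smooth_fun n (\<lambda>x. f x * g x)"
  unfolding smooth_fun_iff using loc_mult Ck_mult by blast

lemma smooth_inverse: "smooth_fun n f \<Longrightarrow> (\<And>x. f x \<noteq> 0) \<Longrightarrow> smooth_fun n (\<lambda>x. inverse (f x))"
  unfolding smooth_fun_iff using loc_inverse Ck_inverse by blast

lemma smooth_sum: "(\<And>j. j \<in> J \<Longrightarrow> smooth_fun n (f j)) \<Longrightarrow> smooth_fun n (\<lambda>x. \<Sum>j\<in>J. f j x)"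
proof (induction J rule: infinite_finite_induct)
  case (infinite A) then show ?case by (simp add: smooth_const)
next
  case empty then show ?case by (simp add: smooth_const)
next
  case (insert a A) then show ?case using smooth_add[of n "f a" "\<lambda>x. \<Sum>j\<in>A. f j x"] by simp
qed

lemma smooth_cmult: "smooth_fun n f \<Longrightarrow> smooth_fun n (\<lambda>x. c * f x)"
  using smooth_mult[OF smooth_const] .

lemma smooth_minus: "smooth_fun n f \<Longrightarrow> smooth_fun n (\<lambda>x. - f x)"
  using smooth_cmult[of n f "-1"] by simp

lemma smooth_diff: "smooth_fun n f \<Longrightarrow> smooth_fun n g \<Longrightarrow> smooth_fun n (\<lambda>x. f x - g x)"
  using smooth_add[OF _ smooth_minus] by simp

lemma smooth_power: "smooth_fun n f \<Longrightarrow> smooth_fun n (\<lambda>x. f x ^ r)"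
proof (induction r)
  case 0 then show ?case by (simp add: smooth_const)
next
  case (Suc r) then show ?case using smooth_mult[of n f "\<lambda>x. f x ^ r"] by simp
qed

lemma smooth_divide: "smooth_fun n f \<Longrightarrow> smooth_fun n g \<Longrightarrow> (\<And>x. g x \<noteq> 0) \<Longrightarrow> smooth_fun n (\<lambda>x. f x / g x)"
  using smooth_mult[OF _ smooth_inverse] by (simp add: divide_inverse)


definition smooth1 :: "(real \<Rightarrow> real) \<Rightarrow> bool" where
  "smooth1 g \<longleftrightarrow> (\<forall>k x. ((deriv ^^ k) g) differentiable (at x))"

lemma smooth1_Ck: assumes "smooth1 g" shows "Ck k 1 (\<lambda>x. (deriv ^^ j) g (x 0))"
proof (induction k arbitrary: j)
  case 0
  have "continuous_on UNIV ((deriv ^^ j) g)"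
    using assms unfolding smooth1_def
    by (intro continuous_at_imp_continuous_on ballI differentiable_imp_continuous_within) blast
  then show ?case
    using continuous_on_compose2[OF _ continuous_on_product_coordinates[of 0], of UNIV "(deriv ^^ j) g"] by simp
next
  case (Suc k)
  show ?case
  proof (rule Ck_SucI[where D="\<lambda>i x. (deriv ^^ Suc j) g (x 0)"])
    have "continuous_on UNIV ((deriv ^^ j) g)"
      using assms unfolding smooth1_def
      by (intro continuous_at_imp_continuous_on ballI differentiable_imp_continuous_within) blast
    then show "continuous_on UNIV (\<lambda>x. (deriv ^^ j) g (x 0))"
      using continuous_on_compose2[OF _ continuous_on_product_coordinates[of 0], of UNIV "(deriv ^^ j) g"] by simp
  next
    fix i x s assume "i < (1::nat)"
    then have i: "i = 0" by simp
    have "((deriv ^^ j) g has_real_derivative deriv ((deriv ^^ j) g) s) (at s)"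
      using assms unfolding smooth1_def by (simp add: DERIV_deriv_iff_real_differentiable)
    then show "((\<lambda>t. (deriv ^^ j) g ((x(i := t)) 0)) has_real_derivative (deriv ^^ Suc j) g ((x(i := s)) 0)) (at s)"
      using i by simp
  next
    fix i assume "i < (1::nat)"
    show "Ck k 1 (\<lambda>x. (deriv ^^ Suc j) g (x 0))" by (rule Suc.IH)
  qed
qed

lemma smooth1_imp_smooth_fun: "smooth1 g \<Longrightarrow> smooth_fun 1 (\<lambda>x. g (x 0))"
  using smooth1_Ck[of g _ 0] by (simp add: smooth_fun_def)

lemma Ck_imp_diff:
  "Ck (Suc k) 1 (\<lambda>x. g (x 0)) \<Longrightarrow> ((deriv ^^ k) g) differentiable (at s)"
proof (induction k arbitrary: g)
  case 0
  have "\<forall>i<(1::nat). \<forall>x::nat\<Rightarrow>real. (\<lambda>t. g ((x(i := t)) 0)) differentiable (at (x i))"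
    using Ck_Suc_iff[THEN iffD1, OF "0"] by (elim conjE)
  then have "(\<lambda>t. g (((\<lambda>_. s)(0 := t)) 0)) differentiable (at ((\<lambda>_. s) 0))"
    by (elim allE[of _ 0] impE allE[of _ "\<lambda>_. s"]) simp_all
  then show ?case by simp
next
  case (Suc k)
  have "\<forall>i<(1::nat). Ck (Suc k) 1 (pd i (\<lambda>x. g (x 0)))"
    using Ck_Suc_iff[THEN iffD1, OF Suc.prems] by (elim conjE)
  then have "Ck (Suc k) 1 (pd 0 (\<lambda>x. g (x 0)))" by (elim allE[of _ 0] impE) simp_all
  moreover have "pd 0 (\<lambda>x. g (x 0)) = (\<lambda>x. deriv g (x 0))"
    by (simp add: pd_def)
  ultimately have "Ck (Suc k) 1 (\<lambda>x. deriv g (x 0))" by (simp only:)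
  then have "((deriv ^^ k) (deriv g)) differentiable (at s)" by (rule Suc.IH)
  then show ?case by (simp add: funpow_Suc_right del: funpow.simps)
qed

lemma smooth_fun_imp_smooth1: "smooth_fun 1 (\<lambda>x. g (x 0)) \<Longrightarrow> smooth1 g"
  unfolding smooth1_def smooth_fun_def using Ck_imp_diff by blast

lemma CinfR_iff: "g \<in> CinfR \<longleftrightarrow> smooth1 g"
  unfolding CinfR_def using smooth1_imp_smooth_fun smooth_fun_imp_smooth1 by blast

definition flat :: "real \<Rightarrow> real" where
  "flat t = (if t \<le> 0 then 0 else exp (- (1 / t)))"

lemma poly_exp_lim: "((\<lambda>t. poly p (1 / t) * exp (- (1 / t))) \<longlongrightarrow> 0) (at_right (0::real))"
proof -
  have "((\<lambda>u. poly p u * exp (- u)) \<longlongrightarrow> 0) at_top"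
  proof -
    have "((\<lambda>u. \<Sum>i\<le>degree p. coeff p i * (u ^ i / exp u)) \<longlongrightarrow> (\<Sum>i\<le>degree p. coeff p i * 0)) at_top"
      by (intro tendsto_intros tendsto_power_div_exp_0)
    moreover have "poly p u * exp (- u) = (\<Sum>i\<le>degree p. coeff p i * (u ^ i / exp u))" for u
    proof -
      have "poly p u * exp (- u) = poly p u / exp u" by (simp add: exp_minus divide_inverse)
      also have "\<dots> = (\<Sum>i\<le>degree p. coeff p i * u ^ i / exp u)"
        by (simp add: poly_altdef sum_divide_distrib)
      finally show ?thesis by (simp add: times_divide_eq_right)
    qed
    ultimately show ?thesis by simp
  qed
  moreover have "filterlim (\<lambda>t::real. 1 / t) at_top (at_right 0)"
    using filterlim_inverse_at_top_right by (simp add: inverse_eq_divide)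
  ultimately show ?thesis by (rule filterlim_compose)
qed

lemma ring_id_aux: "a * - (u ^ 2) * e + e * - (- (u ^ 2)) * b = u ^ 2 * (b - a) * e" for a b e u :: real
  by (simp add: algebra_simps)

lemma flat_deriv_step:
  fixes p :: "real poly"
  defines "h \<equiv> \<lambda>t. if t \<le> 0 then 0 else poly p (1 / t) * exp (- (1 / t))"
  defines "q \<equiv> [:0, 0, 1:] * (p - pderiv p)"
  shows "(h has_real_derivative (if s \<le> 0 then 0 else poly q (1 / s) * exp (- (1 / s)))) (at s)"
proof (cases s "0::real" rule: linorder_cases)
  case less
  have "((\<lambda>_. 0) has_real_derivative 0) (at s)" by (rule DERIV_const)
  then have "(h has_real_derivative 0) (at s)"
    by (rule has_field_derivative_transform_within_open[where S="{..<0}"]) (use less in \<open>auto simp: h_def\<close>)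
  then show ?thesis using less by simp
next
  case greater
  have d1: "((\<lambda>t. 1 / t) has_real_derivative - ((1 / s) ^ 2)) (at s)"
    using DERIV_inverse[of s] greater by (simp add: inverse_eq_divide power2_eq_square)
  have d2: "((\<lambda>t. poly p (1 / t)) has_real_derivative poly (pderiv p) (1 / s) * - ((1 / s) ^ 2)) (at s)"
    by (rule DERIV_chain2[OF poly_DERIV d1])
  have d3: "((\<lambda>t. exp (- (1 / t))) has_real_derivative exp (- (1 / s)) * - (- ((1 / s) ^ 2))) (at s)"
    by (rule DERIV_chain2[OF DERIV_exp DERIV_minus[OF d1]])
  have d: "((\<lambda>t. poly p (1 / t) * exp (- (1 / t))) has_real_derivative
      poly (pderiv p) (1 / s) * - ((1 / s) ^ 2) * exp (- (1 / s)) + exp (- (1 / s)) * - (- ((1 / s) ^ 2)) * poly p (1 / s)) (at s)"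
    by (rule DERIV_mult[OF d2 d3])
  have qp: "poly q u = u ^ 2 * (poly p u - poly (pderiv p) u)" for u
    by (simp add: q_def power2_eq_square)
  have eq: "poly (pderiv p) (1 / s) * - ((1 / s) ^ 2) * exp (- (1 / s)) + exp (- (1 / s)) * - (- ((1 / s) ^ 2)) * poly p (1 / s)
     = poly q (1 / s) * exp (- (1 / s))"
    unfolding qp by (rule ring_id_aux)
  have "((\<lambda>t. poly p (1 / t) * exp (- (1 / t))) has_real_derivative poly q (1 / s) * exp (- (1 / s))) (at s)"
    by (rule DERIV_cong[OF d eq])
  then have "(h has_real_derivative poly q (1 / s) * exp (- (1 / s))) (at s)"
    by (rule has_field_derivative_transform_within_open[where S="{0<..}"]) (use greater in \<open>auto simp: h_def\<close>)
  then show ?thesis using greater by simp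
next
  case equal
  have h0: "h 0 = 0" by (simp add: h_def)
  have "((\<lambda>t. (h t - h 0) / (t - 0)) \<longlongrightarrow> 0) (at 0)"
    unfolding filterlim_at_split
  proof
    have "((\<lambda>t. 0::real) \<longlongrightarrow> 0) (at_left 0)" by simp
    moreover have "eventually (\<lambda>t. 0 = (h t - h 0) / (t - 0)) (at_left (0::real))"
      unfolding eventually_at_left_field by (intro exI[of _ "-1"]) (auto simp: h_def)
    ultimately show "((\<lambda>t. (h t - h 0) / (t - 0)) \<longlongrightarrow> 0) (at_left 0)"
      by (rule Lim_transform_eventually)
  next
    have "((\<lambda>t. poly ([:0, 1:] * p) (1 / t) * exp (- (1 / t))) \<longlongrightarrow> 0) (at_right 0)"
      by (rule poly_exp_lim)
    moreover have "eventually (\<lambda>t. poly ([:0, 1:] * p) (1 / t) * exp (- (1 / t)) = (h t - h 0) / (t - 0)) (at_right (0::real))"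
      unfolding eventually_at_right_field by (intro exI[of _ "1"]) (auto simp: h_def)
    ultimately show "((\<lambda>t. (h t - h 0) / (t - 0)) \<longlongrightarrow> 0) (at_right 0)"
      by (rule Lim_transform_eventually)
  qed
  then have "(h has_real_derivative 0) (at 0)" by (simp only: has_field_derivative_iff)
  then show ?thesis using equal by simp
qed

lemma flat_derivs:
  "\<exists>p. (deriv ^^ k) flat = (\<lambda>t. if t \<le> 0 then 0 else poly p (1 / t) * exp (- (1 / t)))"
proof (induction k)
  case 0
  show ?case by (intro exI[of _ 1]) (simp add: flat_def fun_eq_iff)
next
  case (Suc k)
  then obtain p where p: "(deriv ^^ k) flat = (\<lambda>t. if t \<le> 0 then 0 else poly p (1 / t) * exp (- (1 / t)))" by blast
  have "(deriv ^^ Suc k) flat = deriv ((deriv ^^ k) flat)" by simp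
  also have "\<dots> = (\<lambda>t. if t \<le> 0 then 0 else poly ([:0, 0, 1:] * (p - pderiv p)) (1 / t) * exp (- (1 / t)))"
    unfolding p by (rule ext, rule DERIV_imp_deriv, rule flat_deriv_step)
  finally show ?case by blast
qed

lemma smooth1_flat: "smooth1 flat"
  unfolding smooth1_def
proof (intro allI)
  fix k x
  obtain p where p: "(deriv ^^ k) flat = (\<lambda>t. if t \<le> 0 then 0 else poly p (1 / t) * exp (- (1 / t)))"
    using flat_derivs by blast
  show "(deriv ^^ k) flat differentiable at x"
    unfolding p using flat_deriv_step real_differentiable_def by blast
qed

lemma flat_pos: "t > 0 \<Longrightarrow> flat t > 0" and flat_zero: "t \<le> 0 \<Longrightarrow> flat t = 0"
  by (auto simp: flat_def)

lemma flat_nonneg: "flat t \<ge> 0"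
  by (auto simp: flat_def)


definition Ih :: "real \<Rightarrow> nat \<Rightarrow> (real \<Rightarrow> real) \<Rightarrow> real \<Rightarrow> real" where
  "Ih c j h s = integral {0..1} (\<lambda>\<tau>. \<tau> ^ j * h (c + \<tau> * (s - c)))"

lemma Ih_DERIV:
  assumes dh: "\<And>x. h differentiable (at x)" and cd: "continuous_on UNIV (deriv h)"
  shows "(Ih c j h has_real_derivative Ih c (Suc j) (deriv h) s) (at s)"
proof -
  have ch: "continuous_on UNIV h"
    using dh by (intro continuous_at_imp_continuous_on ballI differentiable_imp_continuous_within) blast
  have "((\<lambda>x. integral (cbox 0 1) (\<lambda>\<tau>. \<tau> ^ j * h (c + \<tau> * (x - c)))) has_field_derivative
      integral (cbox 0 1) (\<lambda>\<tau>. \<tau> ^ Suc j * deriv h (c + \<tau> * (s - c)))) (at s within UNIV)"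
  proof (rule leibniz_rule_field_derivative)
    fix x t :: real
    have "(h has_real_derivative deriv h (c + t * (x - c))) (at (c + t * (x - c)))"
      using dh by (simp add: DERIV_deriv_iff_real_differentiable)
    then have "((\<lambda>x. h (c + t * (x - c))) has_real_derivative deriv h (c + t * (x - c)) * (0 + t * (1 - 0))) (at x)"
      by (rule DERIV_chain2) (auto intro!: derivative_eq_intros)
    then have "((\<lambda>x. t ^ j * h (c + t * (x - c))) has_real_derivative t ^ j * (deriv h (c + t * (x - c)) * (0 + t * (1 - 0)))) (at x)"
      by (rule DERIV_cmult)
    then show "((\<lambda>x. t ^ j * h (c + t * (x - c))) has_real_derivative t ^ Suc j * deriv h (c + t * (x - c))) (at x within UNIV)"
      by (simp add: algebra_simps)
  next
    fix x :: real
    have "continuous_on {0..1} (\<lambda>t. t ^ j * h (c + t * (x - c)))"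
      by (intro continuous_intros continuous_on_compose2[OF ch]) auto
    then show "(\<lambda>t. t ^ j * h (c + t * (x - c))) integrable_on cbox 0 1"
      by (simp add: integrable_continuous_interval)
  next
    show "continuous_on (UNIV \<times> cbox 0 1) (\<lambda>(x, t). t ^ Suc j * deriv h (c + t * (x - c)))"
      by (simp add: split_beta, intro continuous_intros continuous_on_compose2[OF cd]) auto
  qed auto
  then show ?thesis by (simp add: Ih_def[abs_def])
qed

lemma smooth1_deriv: "smooth1 G \<Longrightarrow> smooth1 (deriv G)"
  unfolding smooth1_def by (metis funpow_Suc_right o_apply)

lemma smooth1_diff: "smooth1 G \<Longrightarrow> G differentiable (at x)"
  unfolding smooth1_def by (metis funpow_0)

lemma smooth1_cont_deriv: "smooth1 G \<Longrightarrow> continuous_on UNIV (deriv G)"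
  using smooth1_diff[OF smooth1_deriv]
  by (intro continuous_at_imp_continuous_on ballI differentiable_imp_continuous_within) blast

lemma Ih_higher:
  assumes "smooth1 h"
  shows "(deriv ^^ k) (Ih c j h) = Ih c (j + k) ((deriv ^^ k) h)"
  using assms
proof (induction k arbitrary: j)
  case 0 then show ?case by simp
next
  case (Suc k)
  have sk: "smooth1 ((deriv ^^ k) h)"
    using Suc.prems unfolding smooth1_def by (metis funpow_add o_apply)
  have "(deriv ^^ Suc k) (Ih c j h) = deriv (Ih c (j + k) ((deriv ^^ k) h))"
    using Suc by simp
  also have "\<dots> = Ih c (Suc (j + k)) (deriv ((deriv ^^ k) h))"
    by (rule ext, rule DERIV_imp_deriv, rule Ih_DERIV)
       (use smooth1_diff[OF sk] smooth1_cont_deriv[OF sk] in auto)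
  finally show ?case by simp
qed

lemma smooth1_Ih: assumes "smooth1 h" shows "smooth1 (Ih c j h)"
  unfolding smooth1_def
proof (intro allI)
  fix k x
  have sk: "smooth1 ((deriv ^^ k) h)"
    using assms unfolding smooth1_def by (metis funpow_add o_apply)
  have "(Ih c (j + k) ((deriv ^^ k) h) has_real_derivative Ih c (Suc (j + k)) (deriv ((deriv ^^ k) h)) x) (at x)"
    by (rule Ih_DERIV) (use smooth1_diff[OF sk] smooth1_cont_deriv[OF sk] in auto)
  then show "(deriv ^^ k) (Ih c j h) differentiable (at x)"
    unfolding Ih_higher[OF assms] using real_differentiable_def by blast
qed

lemma hadamard:
  assumes "smooth1 G"
  shows "G s = G c + (s - c) * Ih c 0 (deriv G) s"
proof -
  have "((\<lambda>\<tau>. (s - c) * deriv G (c + \<tau> * (s - c))) has_integral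
      (G (c + 1 * (s - c)) - G (c + 0 * (s - c)))) {0..1}"
  proof (rule fundamental_theorem_of_calculus)
    fix x :: real
    have "(G has_real_derivative deriv G (c + x * (s - c))) (at (c + x * (s - c)))"
      using smooth1_diff[OF assms] by (simp add: DERIV_deriv_iff_real_differentiable)
    then have "((\<lambda>\<tau>. G (c + \<tau> * (s - c))) has_real_derivative deriv G (c + x * (s - c)) * (0 + 1 * (s - c))) (at x)"
      by (rule DERIV_chain2) (auto intro!: derivative_eq_intros)
    then have "((\<lambda>\<tau>. G (c + \<tau> * (s - c))) has_real_derivative (s - c) * deriv G (c + x * (s - c))) (at x within {0..1})"
      by (simp add: has_field_derivative_at_within mult.commute)
    then show "((\<lambda>\<tau>. G (c + \<tau> * (s - c))) has_vector_derivative (s - c) * deriv G (c + x * (s - c))) (at x within {0..1})"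
      by (simp add: has_real_derivative_iff_has_vector_derivative)
  qed simp
  then have hi: "((\<lambda>\<tau>. (s - c) * deriv G (c + \<tau> * (s - c))) has_integral (G s - G c)) {0..1}"
    by simp
  have "integral {0..1} (\<lambda>\<tau>. (s - c) * deriv G (c + \<tau> * (s - c))) = G s - G c"
    by (rule integral_unique[OF hi])
  then show ?thesis by (simp add: Ih_def)
qed

lemma deriv_zero_on_nonneg:
  assumes "smooth1 G" "\<And>t. t \<ge> 0 \<Longrightarrow> G t = 0" "p \<ge> 0"
  shows "deriv G p = 0"
proof -
  have pos: "deriv G q = 0" if "q > 0" for q
  proof -
    have "((\<lambda>_. 0) has_real_derivative 0) (at q)" by (rule DERIV_const)
    then have "(G has_real_derivative 0) (at q)"
      by (rule has_field_derivative_transform_within_open[where S="{0<..}"]) (use that assms(2) in auto)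
    then show ?thesis by (rule DERIV_imp_deriv)
  qed
  show ?thesis
  proof (cases "p > 0")
    case True then show ?thesis by (rule pos)
  next
    case False
    then have p0: "p = 0" using assms(3) by simp
    have "isCont (deriv G) 0"
      using smooth1_cont_deriv[OF assms(1)] by (simp add: continuous_on_eq_continuous_at)
    then have "(deriv G \<longlongrightarrow> deriv G 0) (at_right 0)"
      by (simp add: isCont_def filterlim_at_split)
    moreover have "eventually (\<lambda>q. 0 = deriv G q) (at_right (0::real))"
      unfolding eventually_at_right_field by (intro exI[of _ 1]) (auto, metis pos)
    then have "(deriv G \<longlongrightarrow> 0) (at_right (0::real))"
      by (rule Lim_transform_eventually[OF tendsto_const])
    ultimately show ?thesis using p0 by (auto intro: tendsto_unique[OF trivial_limit_at_right_real])
  qed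
qed

lemma hadamard_vanish:
  assumes "smooth1 G" "\<And>t. t \<ge> 0 \<Longrightarrow> G t = 0" "c \<ge> 0"
  shows "\<exists>E. smooth1 E \<and> (\<forall>t\<ge>0. E t = 0) \<and> (\<forall>s. G s = (s - c) * E s)"
proof (intro exI conjI allI impI)
  show "smooth1 (Ih c 0 (deriv G))" by (rule smooth1_Ih[OF smooth1_deriv[OF assms(1)]])
  show "G s = (s - c) * Ih c 0 (deriv G) s" for s
    using hadamard[OF assms(1), of s c] assms(2)[OF assms(3)] by simp
  fix t :: real assume "t \<ge> 0"
  have zero: "deriv G (c + \<tau> * (t - c)) = 0" if "\<tau> \<in> {0..1}" for \<tau>
  proof (rule deriv_zero_on_nonneg[OF assms(1,2)])
    have "c + \<tau> * (t - c) = (1 - \<tau>) * c + \<tau> * t" by (simp add: algebra_simps)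
    also have "\<dots> \<ge> 0" using that \<open>t \<ge> 0\<close> assms(3) by (auto intro!: add_nonneg_nonneg mult_nonneg_nonneg)
    finally show "c + \<tau> * (t - c) \<ge> 0" .
  qed
  have "integral {0..1} (\<lambda>\<tau>. \<tau> ^ 0 * deriv G (c + \<tau> * (t - c))) = integral {0..1} (\<lambda>\<tau>::real. 0::real)"
    by (intro Henstock_Kurzweil_Integration.integral_cong) (simp add: zero)
  then show "Ih c 0 (deriv G) t = 0"
    unfolding Ih_def by simp
qed

lemma hadamard_vanish_pow:
  assumes "smooth1 G" "\<And>t. t \<ge> 0 \<Longrightarrow> G t = 0" "c \<ge> 0"
  shows "\<exists>E. smooth1 E \<and> (\<forall>t\<ge>0. E t = 0) \<and> (\<forall>s. G s = (s - c) ^ r * E s)"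
proof (induction r)
  case 0 then show ?case using assms by auto
next
  case (Suc r)
  then obtain E where E: "smooth1 E" "\<forall>t\<ge>0. E t = 0" "\<forall>s. G s = (s - c) ^ r * E s" by blast
  obtain E' where E': "smooth1 E'" "\<forall>t\<ge>0. E' t = 0" "\<forall>s. E s = (s - c) * E' s"
    using hadamard_vanish[OF E(1) _ assms(3)] E(2) by blast
  show ?case
    by (intro exI[of _ E'] conjI E'(1,2)) (use E(3) E'(3) in simp)
qed


lemma smooth_comp1: "smooth1 F \<Longrightarrow> smooth_fun n G \<Longrightarrow> smooth_fun n (\<lambda>x. F (G x))"
  using smooth_comp[of 1 "\<lambda>y. F (y 0)" n "\<lambda>_. G"] smooth1_imp_smooth_fun by simp

lemma smooth1_flat': "smooth_fun n G \<Longrightarrow> smooth_fun n (\<lambda>x. flat (G x))"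
  by (rule smooth_comp1[OF smooth1_flat])

lemmas smooth_intros = smooth_add smooth_mult smooth_diff smooth_minus smooth_power smooth_const
  smooth_proj smooth_sum smooth1_flat'

lemma cr_closed: assumes "cinf_ring A \<Phi>" "smooth_fun n f" "\<And>i. i < n \<Longrightarrow> a i \<in> A" shows "\<Phi> n f a \<in> A"
proof -
  have "\<forall>n f a. smooth_fun n f \<and> (\<forall>i<n. a i \<in> A) \<longrightarrow> \<Phi> n f a \<in> A"
    using assms(1) unfolding cinf_ring_def by (elim conjE)
  then show ?thesis using assms(2,3) by blast
qed

lemma cr_local: assumes "cinf_ring A \<Phi>" "smooth_fun n f" "\<And>i. i < n \<Longrightarrow> a i = b i" shows "\<Phi> n f a = \<Phi> n f b"
proof -
  have "\<forall>n f a b. smooth_fun n f \<and> (\<forall>i<n. a i = b i) \<longrightarrow> \<Phi> n f a = \<Phi> n f b"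
    using assms(1) unfolding cinf_ring_def by (elim conjE)
  then show ?thesis using assms(2,3) by blast
qed

lemma cr_proj: assumes "cinf_ring A \<Phi>" "i < n" "\<And>j. j < n \<Longrightarrow> a j \<in> A" shows "\<Phi> n (\<lambda>x. x i) a = a i"
proof -
  have "\<forall>n i a. i < n \<and> (\<forall>j<n. a j \<in> A) \<longrightarrow> \<Phi> n (\<lambda>x. x i) a = a i"
    using assms(1) unfolding cinf_ring_def by (elim conjE)
  then show ?thesis using assms(2,3) by blast
qed

lemma cr_comp: assumes "cinf_ring A \<Phi>" "smooth_fun n f" "\<And>i. i < n \<Longrightarrow> smooth_fun m (g i)"
   "\<And>j. j < m \<Longrightarrow> a j \<in> A" shows "\<Phi> n f (\<lambda>i. \<Phi> m (g i) a) = \<Phi> m (\<lambda>x. f (\<lambda>i. g i x)) a"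
proof -
  have "\<forall>n m f g a. smooth_fun n f \<and> (\<forall>i<n. smooth_fun m (g i)) \<and> (\<forall>j<m. a j \<in> A) \<longrightarrow>
        \<Phi> n f (\<lambda>i. \<Phi> m (g i) a) = \<Phi> m (\<lambda>x. f (\<lambda>i. g i x)) a"
    using assms(1) unfolding cinf_ring_def by (elim conjE)
  then show ?thesis using assms(2,3,4) by blast
qed

lemma cconst_closed: "cinf_ring A \<Phi> \<Longrightarrow> cconst \<Phi> c \<in> A"
  unfolding cconst_def by (rule cr_closed) (auto intro: smooth_const)

lemma cr_const: assumes R: "cinf_ring A \<Phi>" and a: "\<And>j. j < m \<Longrightarrow> a j \<in> A"
  shows "\<Phi> m (\<lambda>_. c) a = cconst \<Phi> c"
proof -
  have "\<Phi> 0 (\<lambda>_. c) (\<lambda>i. \<Phi> m (\<lambda>_. 0) a) = \<Phi> m (\<lambda>x. c) a"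
    using cr_comp[OF R, of 0 "\<lambda>_. c" m "\<lambda>_ _. 0" a] a by (simp add: smooth_const)
  moreover have "\<Phi> 0 (\<lambda>_. c) (\<lambda>i. \<Phi> m (\<lambda>_. 0) a) = cconst \<Phi> c"
    unfolding cconst_def by (rule cr_local[OF R]) (auto simp: smooth_const)
  ultimately show ?thesis by simp
qed

lemma cr_comp1:
  assumes R: "cinf_ring A \<Phi>" and F: "smooth_fun 1 (\<lambda>y. F (y 0))" and G: "smooth_fun m G"
    and a: "\<And>j. j < m \<Longrightarrow> a j \<in> A"
  shows "\<Phi> 1 (\<lambda>y. F (y 0)) (\<lambda>_. \<Phi> m G a) = \<Phi> m (\<lambda>x. F (G x)) a"
  using cr_comp[OF R F, of m "\<lambda>_. G" a] G a by simp

lemma cr_comp2: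
  assumes R: "cinf_ring A \<Phi>" and H: "smooth_fun 2 (\<lambda>y. H (y 0) (y 1))" and F: "smooth_fun m F" and G: "smooth_fun m G"
    and a: "\<And>j. j < m \<Longrightarrow> a j \<in> A"
  shows "\<Phi> 2 (\<lambda>y. H (y 0) (y 1)) (\<lambda>i. if i = 0 then \<Phi> m F a else \<Phi> m G a) = \<Phi> m (\<lambda>x. H (F x) (G x)) a"
proof -
  have e: "(\<lambda>i. \<Phi> m (if i = 0 then F else G) a) = (\<lambda>i. if i = 0 then \<Phi> m F a else \<Phi> m G a)"
    by auto
  have "\<Phi> 2 (\<lambda>y. H (y 0) (y 1)) (\<lambda>i. \<Phi> m (if i = 0 then F else G) a) = \<Phi> m (\<lambda>x. H (F x) (G x)) a"
    using cr_comp[OF R H, of m "\<lambda>i. if i = 0 then F else G" a] F G a by simp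
  then show ?thesis unfolding e .
qed

lemma cr_cong1:
  assumes R: "cinf_ring A \<Phi>" and H: "smooth_fun 1 (\<lambda>y. H (y 0))" and F: "smooth_fun m F" "smooth_fun m F'"
    and a: "\<And>j. j < m \<Longrightarrow> a j \<in> A" and eq: "\<Phi> m F a = \<Phi> m F' a"
  shows "\<Phi> m (\<lambda>x. H (F x)) a = \<Phi> m (\<lambda>x. H (F' x)) a"
proof -
  have "\<Phi> m (\<lambda>x. H (F x)) a = \<Phi> 1 (\<lambda>y. H (y 0)) (\<lambda>_. \<Phi> m F a)"
    using cr_comp1[OF R H F(1) a] by (rule sym)
  also have "\<dots> = \<Phi> 1 (\<lambda>y. H (y 0)) (\<lambda>_. \<Phi> m F' a)" by (simp only: eq)
  also have "\<dots> = \<Phi> m (\<lambda>x. H (F' x)) a" by (rule cr_comp1[OF R H F(2) a])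
  finally show ?thesis .
qed

lemma cr_cong2:
  assumes R: "cinf_ring A \<Phi>" and H: "smooth_fun 2 (\<lambda>y. H (y 0) (y 1))"
    and F: "smooth_fun m F" "smooth_fun m F'" and G: "smooth_fun m G" "smooth_fun m G'"
    and a: "\<And>j. j < m \<Longrightarrow> a j \<in> A" and eqF: "\<Phi> m F a = \<Phi> m F' a" and eqG: "\<Phi> m G a = \<Phi> m G' a"
  shows "\<Phi> m (\<lambda>x. H (F x) (G x)) a = \<Phi> m (\<lambda>x. H (F' x) (G' x)) a"
proof -
  have "\<Phi> m (\<lambda>x. H (F x) (G x)) a = \<Phi> 2 (\<lambda>y. H (y 0) (y 1)) (\<lambda>i. if i = 0 then \<Phi> m F a else \<Phi> m G a)"
    using cr_comp2[OF R H F(1) G(1) a] by (rule sym)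
  also have "\<dots> = \<Phi> 2 (\<lambda>y. H (y 0) (y 1)) (\<lambda>i. if i = 0 then \<Phi> m F' a else \<Phi> m G' a)" by (simp only: eqF eqG)
  also have "\<dots> = \<Phi> m (\<lambda>x. H (F' x) (G' x)) a" by (rule cr_comp2[OF R H F(2) G(2) a])
  finally show ?thesis .
qed

lemma smooth2_mult: "smooth_fun 2 (\<lambda>y. y 0 * y 1)"
  by (rule smooth_mult; rule smooth_proj) auto

lemma smooth2_add: "smooth_fun 2 (\<lambda>y. y 0 + y 1)"
  by (rule smooth_add; rule smooth_proj) auto

lemma cr_mult_zero:
  assumes R: "cinf_ring A \<Phi>" and F: "smooth_fun m F" and G: "smooth_fun m G"
    and a: "\<And>j. j < m \<Longrightarrow> a j \<in> A" and z: "\<Phi> m F a = cconst \<Phi> 0"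
  shows "\<Phi> m (\<lambda>x. F x * G x) a = cconst \<Phi> 0"
proof -
  have "\<Phi> m (\<lambda>x. F x * G x) a = \<Phi> m (\<lambda>x. (\<lambda>_. 0) x * G x) a"
    by (rule cr_cong2[OF R smooth2_mult F smooth_const G G a]) (use z cr_const[OF R a] in auto)
  then show ?thesis using cr_const[OF R a] by simp
qed

lemma cr_mult_zero':
  assumes R: "cinf_ring A \<Phi>" and F: "smooth_fun m F" and G: "smooth_fun m G"
    and a: "\<And>j. j < m \<Longrightarrow> a j \<in> A" and z: "\<Phi> m G a = cconst \<Phi> 0"
  shows "\<Phi> m (\<lambda>x. F x * G x) a = cconst \<Phi> 0"
  using cr_mult_zero[OF R G F a z] by (simp add: mult.commute)

lemma cr_add_zero:
  assumes R: "cinf_ring A \<Phi>" and F: "smooth_fun m F" and G: "smooth_fun m G"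
    and a: "\<And>j. j < m \<Longrightarrow> a j \<in> A" and z: "\<Phi> m G a = cconst \<Phi> 0"
  shows "\<Phi> m (\<lambda>x. F x + G x) a = \<Phi> m F a"
proof -
  have "\<Phi> m (\<lambda>x. F x + G x) a = \<Phi> m (\<lambda>x. F x + (\<lambda>_. 0) x) a"
    by (rule cr_cong2[OF R smooth2_add F F G smooth_const a]) (use z cr_const[OF R a] in auto)
  then show ?thesis by simp
qed

lemma cr_sum_zero:
  assumes R: "cinf_ring A \<Phi>" and F: "\<And>i. i \<in> I \<Longrightarrow> smooth_fun m (F i)"
    and a: "\<And>j. j < m \<Longrightarrow> a j \<in> A" and z: "\<And>i. i \<in> I \<Longrightarrow> \<Phi> m (F i) a = cconst \<Phi> 0"
    and fin: "finite I"
  shows "\<Phi> m (\<lambda>x. \<Sum>i\<in>I. F i x) a = cconst \<Phi> 0"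
  using fin F z
proof (induction I rule: finite_induct)
  case empty then show ?case using cr_const[OF R a] by simp
next
  case (insert i I)
  have "\<Phi> m (\<lambda>x. \<Sum>i\<in>insert i I. F i x) a = \<Phi> m (\<lambda>x. (\<Sum>i\<in>I. F i x) + F i x) a"
    using insert.hyps by (simp add: add.commute)
  also have "\<dots> = \<Phi> m (\<lambda>x. \<Sum>i\<in>I. F i x) a"
    by (rule cr_add_zero[OF R smooth_sum _ a]) (use insert.prems in auto)
  also have "\<dots> = cconst \<Phi> 0" using insert by auto
  finally show ?case .
qed

lemma cconst_shift:
  assumes R: "cinf_ring A \<Phi>" and eq: "cconst \<Phi> c = cconst \<Phi> d"
  shows "cconst \<Phi> (c + e) = cconst \<Phi> (d + e)"
proof -
  have *: "\<Phi> 1 (\<lambda>y. y 0 + e) (\<lambda>_. cconst \<Phi> c') = cconst \<Phi> (c' + e)" for c'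
  proof -
    have "\<Phi> 1 (\<lambda>y. y 0 + e) (\<lambda>_. \<Phi> 0 (\<lambda>_. c') (\<lambda>_. undefined)) = \<Phi> 0 (\<lambda>x. c' + e) (\<lambda>_. undefined)"
      by (rule cr_comp1[OF R, of "\<lambda>s. s + e"]) (auto intro: smooth_add smooth_proj smooth_const)
    then show ?thesis unfolding cconst_def .
  qed
  show ?thesis using *[of c] *[of d] eq by simp
qed


definition nilp :: "'a cops \<Rightarrow> 'a \<Rightarrow> real \<Rightarrow> nat \<Rightarrow> bool" where
  "nilp \<Phi> w c r \<longleftrightarrow> \<Phi> 1 (\<lambda>x. (x 0 - c) ^ r) (\<lambda>_. w) = cconst \<Phi> 0"

lemma nilp_mono:
  assumes R: "cinf_ring A \<Phi>" and w: "w \<in> A" and n: "nilp \<Phi> w c r" and le: "r \<le> r'"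
  shows "nilp \<Phi> w c r'"
proof -
  have "(\<lambda>x::nat\<Rightarrow>real. (x 0 - c) ^ r') = (\<lambda>x. (x 0 - c) ^ r * (x 0 - c) ^ (r' - r))"
    using le by (simp add: power_add[symmetric])
  moreover have "\<Phi> 1 (\<lambda>x. (x 0 - c) ^ r * (x 0 - c) ^ (r' - r)) (\<lambda>_. w) = cconst \<Phi> 0"
    by (rule cr_mult_zero[OF R]) (use n w in \<open>auto intro!: smooth_intros simp: nilp_def\<close>)
  ultimately show ?thesis by (simp add: nilp_def)
qed

lemma nilp_zero:
  assumes R: "cinf_ring A \<Phi>" and w: "w \<in> A" and n: "nilp \<Phi> w c 0"
  shows "cconst \<Phi> 1 = cconst \<Phi> 0"
  using n cr_const[OF R, of 1 "\<lambda>_. w" 1] w by (simp add: nilp_def)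

lemma weil_ring: "weil W \<Psi> \<Longrightarrow> cinf_ring W \<Psi>"
  by (simp add: weil_def)

lemma weil_nontriv: "weil W \<Psi> \<Longrightarrow> cconst \<Psi> 0 \<noteq> cconst \<Psi> 1"
  by (simp add: weil_def)

lemma weil_real_part:
  assumes "weil W \<Psi>" "w \<in> W" shows "\<exists>c r. nilp \<Psi> w c r"
proof -
  have R: "cinf_ring W \<Psi>" using assms(1) by (rule weil_ring)
  have "\<forall>w\<in>W. \<exists>c m. m \<in> W \<and> (\<exists>r. \<Psi> 1 (\<lambda>x. x 0 ^ r) (\<lambda>_. m) = cconst \<Psi> 0) \<and>
                 w = \<Psi> 1 (\<lambda>x. c + x 0) (\<lambda>_. m)"
    using assms(1) unfolding weil_def by (elim conjE)
  then obtain c m r where m: "m \<in> W" "\<Psi> 1 (\<lambda>x. x 0 ^ r) (\<lambda>_. m) = cconst \<Psi> 0"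
    "w = \<Psi> 1 (\<lambda>x. c + x 0) (\<lambda>_. m)" using assms(2) by blast
  have "\<Psi> 1 (\<lambda>y. (y 0 - c) ^ r) (\<lambda>_. \<Psi> 1 (\<lambda>x. c + x 0) (\<lambda>_. m)) = \<Psi> 1 (\<lambda>x. (c + x 0 - c) ^ r) (\<lambda>_. m)"
    by (rule cr_comp1[OF R, of "\<lambda>s. (s - c) ^ r"]) (use m in \<open>auto intro!: smooth_intros\<close>)
  then have "nilp \<Psi> w c r" using m by (simp add: nilp_def)
  then show ?thesis by blast
qed

lemma nilp_unique:
  assumes R: "cinf_ring A \<Phi>" and w: "w \<in> A" and nt: "cconst \<Phi> 0 \<noteq> cconst \<Phi> 1"
    and n1: "nilp \<Phi> w c r" and n2: "nilp \<Phi> w c' r'"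
  shows "c = c'"
proof (rule ccontr)
  assume ne: "c \<noteq> c'"
  define R' where "R' = Suc (r + r')"
  have n1': "nilp \<Phi> w c R'" by (rule nilp_mono[OF R w n1]) (simp add: R'_def)
  have n2': "nilp \<Phi> w c' R'" by (rule nilp_mono[OF R w n2]) (simp add: R'_def)
  define h where "h s = ((s - c) ^ 2) ^ R' + ((s - c') ^ 2) ^ R'" for s :: real
  have hpos: "h s > 0" for s
  proof (cases "s = c")
    case True
    then have "s - c' \<noteq> 0" using ne by simp
    then have "((s - c') ^ 2) ^ R' > 0" by simp
    moreover have "((s - c) ^ 2) ^ R' \<ge> 0" by simp
    ultimately show ?thesis unfolding h_def by linarith
  next
    case False
    then have "((s - c) ^ 2) ^ R' > 0" by simp
    moreover have "((s - c') ^ 2) ^ R' \<ge> 0" by simp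
    ultimately show ?thesis unfolding h_def by linarith
  qed
  have feq: "(\<lambda>x::nat\<Rightarrow>real. 1::real) = (\<lambda>x. (x 0 - c) ^ R' * ((x 0 - c) ^ R' / h (x 0)) + (x 0 - c') ^ R' * ((x 0 - c') ^ R' / h (x 0)))"
  proof
    fix x :: "nat \<Rightarrow> real"
    have gen: "P * (P / H) + Q * (Q / H) = (P * P + Q * Q) / H" for P Q H :: real
      by (simp add: add_divide_distrib)
    have sq: "(u::real) ^ R' * u ^ R' = (u ^ 2) ^ R'" for u
      by (simp add: power2_eq_square power_mult_distrib)
    have "(x 0 - c) ^ R' * ((x 0 - c) ^ R' / h (x 0)) + (x 0 - c') ^ R' * ((x 0 - c') ^ R' / h (x 0))
        = h (x 0) / h (x 0)"
      unfolding gen sq h_def by (rule refl)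
    also have "\<dots> = 1" using hpos[of "x 0"] by simp
    finally show "1 = (x 0 - c) ^ R' * ((x 0 - c) ^ R' / h (x 0)) + (x 0 - c') ^ R' * ((x 0 - c') ^ R' / h (x 0))" by simp
  qed
  have sh: "smooth_fun 1 (\<lambda>x. h (x 0))" unfolding h_def by (intro smooth_intros) auto
  have sq: "smooth_fun 1 (\<lambda>x. (x 0 - e) ^ R' / h (x 0))" for e
    by (rule smooth_divide[OF _ sh]) (use hpos in \<open>auto intro!: smooth_intros simp: less_imp_neq[symmetric]\<close>)
  have a: "\<And>j. j < 1 \<Longrightarrow> (\<lambda>_. w) j \<in> A" using w by simp
  have "cconst \<Phi> 1 = \<Phi> 1 (\<lambda>x. 1) (\<lambda>_. w)" using cr_const[OF R, of 1 "\<lambda>_. w" 1] w by simp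
  also have "\<dots> = \<Phi> 1 (\<lambda>x. (x 0 - c) ^ R' * ((x 0 - c) ^ R' / h (x 0)) + (x 0 - c') ^ R' * ((x 0 - c') ^ R' / h (x 0))) (\<lambda>_. w)"
    by (simp only: feq)
  also have "\<dots> = \<Phi> 1 (\<lambda>x. (x 0 - c) ^ R' * ((x 0 - c) ^ R' / h (x 0))) (\<lambda>_. w)"
  proof (rule cr_add_zero[OF R _ _ a])
    show "smooth_fun 1 (\<lambda>x. (x 0 - c) ^ R' * ((x 0 - c) ^ R' / h (x 0)))"
      by (rule smooth_mult[OF _ sq]) (intro smooth_intros, auto)
    show "smooth_fun 1 (\<lambda>x. (x 0 - c') ^ R' * ((x 0 - c') ^ R' / h (x 0)))"
      by (rule smooth_mult[OF _ sq]) (intro smooth_intros, auto)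
    show "\<Phi> 1 (\<lambda>x. (x 0 - c') ^ R' * ((x 0 - c') ^ R' / h (x 0))) (\<lambda>_. w) = cconst \<Phi> 0"
      by (rule cr_mult_zero[OF R _ sq a]) (use n2' in \<open>auto intro!: smooth_intros simp: nilp_def\<close>)
  qed
  also have "\<dots> = cconst \<Phi> 0"
    by (rule cr_mult_zero[OF R _ sq a]) (use n1' in \<open>auto intro!: smooth_intros simp: nilp_def\<close>)
  finally show False using nt by simp
qed


lemma cont_cube:
  assumes loc: "loc n f" and cont: "continuous_on UNIV f" and e: "\<epsilon> > 0"
  shows "\<exists>\<delta>>0. \<forall>x. (\<forall>i<n. \<bar>x i - c i\<bar> < \<delta>) \<longrightarrow> \<bar>f x - f c\<bar> < \<epsilon>"
proof (rule ccontr)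
  assume neg: "\<not> ?thesis"
  have "\<exists>x. (\<forall>i<n. \<bar>x i - c i\<bar> < 1 / real (Suc k)) \<and> \<not> \<bar>f x - f c\<bar> < \<epsilon>" for k
  proof -
    have "1 / real (Suc k) > 0" by simp
    then show ?thesis using neg by blast
  qed
  then obtain X where X1: "\<And>k i. i < n \<Longrightarrow> \<bar>X k i - c i\<bar> < 1 / real (Suc k)"
    and X2: "\<And>k. \<not> \<bar>f (X k) - f c\<bar> < \<epsilon>" by metis
  have lim: "(\<lambda>k. restr n (X k)) \<longlonglongrightarrow> restr n c"
  proof (rule tendsto_coordI)
    fix i
    show "(\<lambda>k. restr n (X k) i) \<longlonglongrightarrow> restr n c i"
    proof (cases "i < n")
      case True
      have "(\<lambda>k. 1 / real (Suc k)) \<longlonglongrightarrow> 0"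
        using LIMSEQ_inverse_real_of_nat by (simp add: inverse_eq_divide)
      then have "(\<lambda>k. X k i - c i) \<longlonglongrightarrow> 0"
        by (rule Lim_null_comparison[rotated]) (use X1[OF True] less_imp_le in \<open>auto intro!: always_eventually\<close>)
      then show ?thesis using True by (simp add: restr_def LIM_zero_iff)
    next
      case False then show ?thesis by (simp add: restr_def)
    qed
  qed
  have "isCont f (restr n c)" using cont by (simp add: continuous_on_eq_continuous_at)
  then have "(\<lambda>k. f (restr n (X k))) \<longlonglongrightarrow> f (restr n c)"
    by (rule isCont_tendsto_compose[OF _ lim])
  moreover have e1: "f (restr n x) = f x" for x using loc unfolding loc_def by metis
  ultimately have "(\<lambda>k. f (X k)) \<longlonglongrightarrow> f c" by (simp only: e1)
  then obtain N where "\<And>k. k \<ge> N \<Longrightarrow> dist (f (X k)) (f c) < \<epsilon>"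
    using e unfolding lim_sequentially by blast
  then have "\<bar>f (X N) - f c\<bar> < \<epsilon>" by (simp add: dist_real_def)
  then show False using X2 by blast
qed

definition bet :: "real \<Rightarrow> real \<Rightarrow> real" where
  "bet e s = s / (s ^ 2 + flat (e ^ 2 - s ^ 2))"

lemma bet_den_pos: "e > 0 \<Longrightarrow> s ^ 2 + flat (e ^ 2 - s ^ 2) > 0"
proof (cases "s = 0")
  case True
  assume "e > 0"
  then show ?thesis using True flat_pos[of "e ^ 2"] by simp
next
  case False
  then have "s ^ 2 > 0" by simp
  then show ?thesis using flat_nonneg[of "e ^ 2 - s ^ 2"] by linarith
qed

lemma bet_inv: assumes "e > 0" "\<bar>s\<bar> \<ge> e" shows "s * bet e s = 1"
proof -
  have "e ^ 2 \<le> \<bar>s\<bar> ^ 2" by (rule power_mono) (use assms in auto)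
  then have "e ^ 2 \<le> s ^ 2" by simp
  then have "flat (e ^ 2 - s ^ 2) = 0" by (intro flat_zero) simp
  moreover have "s \<noteq> 0" using assms by auto
  ultimately show ?thesis by (simp add: bet_def power2_eq_square)
qed

lemma smooth_bet: assumes "e > 0" "smooth_fun n K" shows "smooth_fun n (\<lambda>x. bet e (K x))"
  unfolding bet_def
proof (rule smooth_divide)
  show "smooth_fun n K" by (rule assms(2))
  show "smooth_fun n (\<lambda>x. (K x)\<^sup>2 + flat (e\<^sup>2 - (K x)\<^sup>2))"
    by (intro smooth_add smooth_power smooth1_flat' smooth_diff smooth_const assms(2))
  show "(K x)\<^sup>2 + flat (e\<^sup>2 - (K x)\<^sup>2) \<noteq> 0" for x using bet_den_pos[OF assms(1), of "K x"] by linarith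
qed

lemma vanish_near:
  assumes R: "cinf_ring A \<Phi>" and a: "\<And>i. i < n \<Longrightarrow> a i \<in> A"
    and nil: "\<And>i. i < n \<Longrightarrow> nilp \<Phi> (a i) (c i) r"
    and G: "smooth_fun n G" and d: "\<delta> > 0"
    and van: "\<And>x. (\<forall>i<n. \<bar>x i - c i\<bar> < \<delta>) \<Longrightarrow> G x = 0"
  shows "\<Phi> n G a = cconst \<Phi> 0"
proof -
  define e where "e = \<delta> ^ (2 * r)"
  have e: "e > 0" using d by (simp add: e_def)
  define N where "N x = (\<Sum>i<n. (x i - c i) ^ (2 * r))" for x :: "nat \<Rightarrow> real"
  have Nnn: "N x \<ge> 0" for x unfolding N_def by (intro sum_nonneg) (simp add: power_mult)
  have sN: "smooth_fun n N" unfolding N_def by (intro smooth_intros) auto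
  have feq: "G x = (G x * bet e (N x)) * N x" for x
  proof (cases "N x \<ge> e")
    case True
    then have "N x * bet e (N x) = 1" using bet_inv[OF e] Nnn[of x] by simp
    then show ?thesis by (simp add: mult.assoc mult.commute)
  next
    case False
    have "\<bar>x i - c i\<bar> < \<delta>" if "i < n" for i
    proof -
      have "(x i - c i) ^ (2 * r) \<le> N x"
        unfolding N_def by (rule member_le_sum) (use that in \<open>auto simp: power_mult\<close>)
      also have "\<dots> < \<delta> ^ (2 * r)" using False e_def by simp
      finally have "\<bar>x i - c i\<bar> ^ (2 * r) < \<delta> ^ (2 * r)" by (simp add: power_even_abs)
      then show ?thesis by (rule power_less_imp_less_base) (use d in simp)
    qed
    then have "G x = 0" by (intro van) blast
    then show ?thesis by simp
  qed
  have Nz: "\<Phi> n N a = cconst \<Phi> 0"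
    unfolding N_def
  proof (rule cr_sum_zero[OF R _ a])
    fix i assume "i \<in> {..<n}"
    then have i: "i < n" by simp
    have "\<Phi> n (\<lambda>x. (x i - c i) ^ (2 * r)) a = \<Phi> 1 (\<lambda>y. (y 0 - c i) ^ (2 * r)) (\<lambda>_. \<Phi> n (\<lambda>x. x i) a)"
      by (rule cr_comp1[OF R, of "\<lambda>s. (s - c i) ^ (2 * r)", symmetric]) (use a i in \<open>auto intro!: smooth_intros\<close>)
    also have "\<dots> = \<Phi> 1 (\<lambda>y. (y 0 - c i) ^ (2 * r)) (\<lambda>_. a i)"
      using cr_proj[OF R i a] by simp
    also have "\<dots> = cconst \<Phi> 0"
      using nilp_mono[OF R a[OF i] nil[OF i], of "2 * r"] by (simp add: nilp_def)
    finally show "\<Phi> n (\<lambda>x. (x i - c i) ^ (2 * r)) a = cconst \<Phi> 0" .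
    show "smooth_fun n (\<lambda>x. (x i - c i) ^ (2 * r))" using i by (intro smooth_intros) auto
  next
    show "finite {..<n}" by simp
  qed
  have Geq: "G = (\<lambda>x. (G x * bet e (N x)) * N x)" by (rule ext, rule feq)
  have "\<Phi> n G a = \<Phi> n (\<lambda>x. (G x * bet e (N x)) * N x) a"
    by (rule arg_cong[of _ _ "\<lambda>F. \<Phi> n F a", OF Geq])
  also have "\<dots> = cconst \<Phi> 0"
    by (rule cr_mult_zero'[OF R _ sN a Nz]) (intro smooth_mult G smooth_bet e sN)
  finally show ?thesis .
qed


lemma smooth_fun_loc: "smooth_fun n f \<Longrightarrow> loc n f"
  by (simp add: smooth_fun_iff)

lemma smooth_fun_cont: "smooth_fun n f \<Longrightarrow> continuous_on UNIV f"
  using Ck_cont by (auto simp: smooth_fun_iff)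

lemma cr_const1: "cinf_ring A \<Phi> \<Longrightarrow> y \<in> A \<Longrightarrow> \<Phi> 1 (\<lambda>_. c) (\<lambda>_. y) = cconst \<Phi> c"
  using cr_const[of A \<Phi> 1 "\<lambda>_. y" c] by simp

lemma aux_lin: "(p::real) < D / 2 \<Longrightarrow> D \<le> q + B \<Longrightarrow> q = p \<Longrightarrow> D / 2 \<le> B"
  by linarith

lemma pi_nilp:
  assumes Wl: "weil W \<Psi>" and a: "\<And>i. i < n \<Longrightarrow> a i \<in> W"
    and nil: "\<And>i. i < n \<Longrightarrow> \<exists>r. nilp \<Psi> (a i) (c i) r" and f: "smooth_fun n f"
  shows "\<exists>r. nilp \<Psi> (\<Psi> n f a) (f c) r"
proof -
  have R: "cinf_ring W \<Psi>" using Wl by (rule weil_ring)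
  have "\<forall>i. \<exists>r. i < n \<longrightarrow> nilp \<Psi> (a i) (c i) r" using nil by blast
  then obtain rr where rr: "\<And>i. i < n \<Longrightarrow> nilp \<Psi> (a i) (c i) (rr i)" by metis
  define rs where "rs = (\<Sum>i<n. rr i)"
  have nil': "nilp \<Psi> (a i) (c i) rs" if "i < n" for i
    by (rule nilp_mono[OF R a[OF that] rr[OF that]]) (use that in \<open>auto simp: rs_def intro!: member_le_sum\<close>)
  define y where "y = \<Psi> n f a"
  have yW: "y \<in> W" unfolding y_def by (rule cr_closed[OF R f a])
  obtain d s where ds: "nilp \<Psi> y d s" using weil_real_part[OF Wl yW] by blast
  show ?thesis
  proof (cases "d = f c")
    case True then show ?thesis using ds y_def by blast
  next
    case False
    define \<epsilon> where "\<epsilon> = \<bar>f c - d\<bar> / 2"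
    have e: "\<epsilon> > 0" using False by (simp add: \<epsilon>_def)
    obtain \<delta> where d: "\<delta> > 0" and cube: "\<And>x. (\<forall>i<n. \<bar>x i - c i\<bar> < \<delta>) \<Longrightarrow> \<bar>f x - f c\<bar> < \<epsilon>"
      using cont_cube[OF smooth_fun_loc[OF f] smooth_fun_cont[OF f] e, of c] by blast
    define s' where "s' = Suc s"
    have ds': "nilp \<Psi> y d s'" by (rule nilp_mono[OF R yW ds]) (simp add: s'_def)
    define K where "K u = ((u - d) * bet \<epsilon> (u - d)) ^ s' - 1" for u
    have sK: "smooth_fun m (\<lambda>x. K (F x))" if "smooth_fun m F" for m F
      unfolding K_def by (intro smooth_intros smooth_mult smooth_bet e that)
    have van: "K (f x) = 0" if "\<forall>i<n. \<bar>x i - c i\<bar> < \<delta>" for x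
    proof -
      have "\<bar>f x - f c\<bar> < \<epsilon>" using cube that by blast
      moreover have "\<bar>f c - d\<bar> \<le> \<bar>f c - f x\<bar> + \<bar>f x - d\<bar>"
        using abs_triangle_ineq[of "f c - f x" "f x - d"] by simp
      moreover have "\<bar>f c - f x\<bar> = \<bar>f x - f c\<bar>" by (rule abs_minus_commute)
      ultimately have "\<bar>f x - d\<bar> \<ge> \<epsilon>" unfolding \<epsilon>_def by (rule aux_lin)
      then have "(f x - d) * bet \<epsilon> (f x - d) = 1" by (rule bet_inv[OF e])
      then show ?thesis by (simp add: K_def)
    qed
    have aW: "\<And>j. j < 1 \<Longrightarrow> (\<lambda>_::nat. y) j \<in> W" using yW by simp
    have z1: "\<Psi> n (\<lambda>x. K (f x)) a = cconst \<Psi> 0"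
      by (rule vanish_near[OF R a nil' sK[OF f] d van]) auto
    have "\<Psi> n (\<lambda>x. K (f x)) a = \<Psi> 1 (\<lambda>z. K (z 0)) (\<lambda>_. y)"
      unfolding y_def by (rule cr_comp1[OF R _ f a, symmetric]) (rule sK, rule smooth_proj, simp)
    also have "\<dots> = \<Psi> 1 (\<lambda>z. (z 0 - d) ^ s' * bet \<epsilon> (z 0 - d) ^ s' - 1) (\<lambda>_. y)"
      by (simp add: K_def power_mult_distrib)
    also have "\<dots> = \<Psi> 1 (\<lambda>z. (\<lambda>_. 0) z * bet \<epsilon> (z 0 - d) ^ s' - 1) (\<lambda>_. y)"
    proof (rule cr_cong2[OF R, where a="\<lambda>_. y" and H="\<lambda>u v. u * v - 1" and F="\<lambda>z. (z 0 - d) ^ s'"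
          and F'="\<lambda>_. 0" and G="\<lambda>z. bet \<epsilon> (z 0 - d) ^ s'" and G'="\<lambda>z. bet \<epsilon> (z 0 - d) ^ s'"])
      show "smooth_fun 2 (\<lambda>y. y 0 * y 1 - 1)" by (intro smooth_intros) auto
      show "smooth_fun 1 (\<lambda>z. (z 0 - d) ^ s')" by (intro smooth_intros) auto
      show "smooth_fun 1 (\<lambda>z::nat\<Rightarrow>real. 0::real)" by (rule smooth_const)
      show "smooth_fun 1 (\<lambda>z. bet \<epsilon> (z 0 - d) ^ s')" by (intro smooth_power smooth_bet e smooth_intros) auto
      show "smooth_fun 1 (\<lambda>z. bet \<epsilon> (z 0 - d) ^ s')" by (intro smooth_power smooth_bet e smooth_intros) auto
      show "\<Psi> 1 (\<lambda>z. (z 0 - d) ^ s') (\<lambda>_. y) = \<Psi> 1 (\<lambda>_. 0) (\<lambda>_. y)"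
        using ds' cr_const1[OF R yW] by (simp add: nilp_def)
    qed (use yW in auto)
    also have "\<dots> = cconst \<Psi> (-1)" using cr_const1[OF R yW] by simp
    finally have "cconst \<Psi> (-1) = cconst \<Psi> 0" using z1 by simp
    then have "cconst \<Psi> (-1 + 1) = cconst \<Psi> (0 + 1)" by (rule cconst_shift[OF R])
    then show ?thesis using weil_nontriv[OF Wl] by simp
  qed
qed

definition rp :: "'a cops \<Rightarrow> 'a \<Rightarrow> real" where
  "rp \<Psi> w = (THE c. \<exists>r. nilp \<Psi> w c r)"

lemma rp_nilp:
  assumes Wl: "weil W \<Psi>" and w: "w \<in> W"
  shows "\<exists>r. nilp \<Psi> w (rp \<Psi> w) r"
proof -
  have ex: "\<exists>c r. nilp \<Psi> w c r" by (rule weil_real_part[OF Wl w])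
  have un: "c = c'" if "\<exists>r. nilp \<Psi> w c r" "\<exists>r. nilp \<Psi> w c' r" for c c'
    using that nilp_unique[OF weil_ring[OF Wl] w weil_nontriv[OF Wl]] by blast
  have "\<exists>!c. \<exists>r. nilp \<Psi> w c r" using ex un by blast
  then show ?thesis unfolding rp_def by (rule theI')
qed

lemma rp_eq:
  assumes Wl: "weil W \<Psi>" and w: "w \<in> W" and n: "nilp \<Psi> w c r"
  shows "rp \<Psi> w = c"
  using rp_nilp[OF Wl w] nilp_unique[OF weil_ring[OF Wl] w weil_nontriv[OF Wl]] n by blast

lemma rp_hom:
  assumes Wl: "weil W \<Psi>" and f: "smooth_fun n f" and a: "\<And>i. i < n \<Longrightarrow> a i \<in> W"
  shows "rp \<Psi> (\<Psi> n f a) = f (\<lambda>i. rp \<Psi> (a i))"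
proof -
  have "\<exists>r. nilp \<Psi> (\<Psi> n f a) (f (\<lambda>i. rp \<Psi> (a i))) r"
    by (rule pi_nilp[OF Wl a _ f]) (use rp_nilp[OF Wl a] in auto)
  then obtain r where "nilp \<Psi> (\<Psi> n f a) (f (\<lambda>i. rp \<Psi> (a i))) r" by blast
  moreover have cl: "\<Psi> n f a \<in> W" by (rule cr_closed[OF weil_ring[OF Wl] f a])
  ultimately show ?thesis using rp_eq[OF Wl cl] by blast
qed

lemma point_from_weil:
  assumes Wl: "weil W \<Psi>" and h: "cinf_hom A \<Phi> W \<Psi> h"
  shows "is_point A \<Phi> (\<lambda>x. rp \<Psi> (h x))"
  unfolding is_point_def cinf_hom_def
proof (intro conjI allI impI ballI)
  fix n f a assume fa: "smooth_fun n f \<and> (\<forall>i<n. a i \<in> A)"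
  have hW: "\<And>i. i < n \<Longrightarrow> h (a i) \<in> W" using h fa unfolding cinf_hom_def by blast
  have "h (\<Phi> n f a) = \<Psi> n f (\<lambda>i. h (a i))" using h fa unfolding cinf_hom_def by blast
  then show "rp \<Psi> (h (\<Phi> n f a)) = real_ops n f (\<lambda>i. rp \<Psi> (h (a i)))"
    using rp_hom[OF Wl _ hW] fa by (simp add: real_ops_def)
qed simp

lemma vanish_half:
  assumes R: "cinf_ring W \<Psi>" and w: "w \<in> W" and n: "nilp \<Psi> w c r" and c: "c \<ge> 0"
    and D: "smooth1 D" and van: "\<And>t. t \<ge> 0 \<Longrightarrow> D t = 0"
  shows "\<Psi> 1 (\<lambda>x. D (x 0)) (\<lambda>_. w) = cconst \<Psi> 0"
proof -
  obtain E where E: "smooth1 E" "\<forall>s. D s = (s - c) ^ r * E s"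
    using hadamard_vanish_pow[OF D van c, of r] by blast
  have "(\<lambda>x::nat\<Rightarrow>real. D (x 0)) = (\<lambda>x. (x 0 - c) ^ r * E (x 0))" using E(2) by simp
  moreover have "\<Psi> 1 (\<lambda>x. (x 0 - c) ^ r * E (x 0)) (\<lambda>_. w) = cconst \<Psi> 0"
    by (rule cr_mult_zero[OF R]) (use n w smooth1_imp_smooth_fun[OF E(1)] in \<open>auto intro!: smooth_intros simp: nilp_def\<close>)
  ultimately show ?thesis by simp
qed

lemma agree_half:
  assumes R: "cinf_ring W \<Psi>" and w: "w \<in> W" and n: "nilp \<Psi> w c r" and c: "c \<ge> 0"
    and g: "smooth1 g" and g': "smooth1 g'" and eq: "\<And>t. t \<ge> 0 \<Longrightarrow> g t = g' t"
  shows "\<Psi> 1 (\<lambda>x. g (x 0)) (\<lambda>_. w) = \<Psi> 1 (\<lambda>x. g' (x 0)) (\<lambda>_. w)"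
proof -
  have sg: "smooth_fun 1 (\<lambda>x. g (x 0))" "smooth_fun 1 (\<lambda>x. g' (x 0))"
    by (rule smooth1_imp_smooth_fun[OF g], rule smooth1_imp_smooth_fun[OF g'])
  have sD: "smooth_fun 1 (\<lambda>x. g (x 0) - g' (x 0))" by (rule smooth_diff[OF sg])
  then have D: "smooth1 (\<lambda>s. g s - g' s)" by (intro smooth_fun_imp_smooth1) simp
  have z: "\<Psi> 1 (\<lambda>x. g (x 0) - g' (x 0)) (\<lambda>_. w) = cconst \<Psi> 0"
    using vanish_half[OF R w n c D] eq by simp
  have "\<Psi> 1 (\<lambda>x. g (x 0)) (\<lambda>_. w) = \<Psi> 1 (\<lambda>x. g' (x 0) + (g (x 0) - g' (x 0))) (\<lambda>_. w)" by simp
  also have "\<dots> = \<Psi> 1 (\<lambda>x. g' (x 0)) (\<lambda>_. w)"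
    by (rule cr_add_zero[OF R sg(2) sD _ z]) (use w in simp)
  finally show ?thesis .
qed


lemma hom_closed: "cinf_hom A \<Phi> B \<Psi> h \<Longrightarrow> x \<in> A \<Longrightarrow> h x \<in> B"
  unfolding cinf_hom_def by blast

lemma hom_ops: "cinf_hom A \<Phi> B \<Psi> h \<Longrightarrow> smooth_fun n f \<Longrightarrow> (\<And>i. i < n \<Longrightarrow> a i \<in> A) \<Longrightarrow>
    h (\<Phi> n f a) = \<Psi> n f (\<lambda>i. h (a i))"
  unfolding cinf_hom_def by blast

lemma id_CinfR: "(\<lambda>t. t) \<in> CinfR"
  unfolding CinfR_def by (simp add: smooth_proj)

lemma v_eval:
  assumes vh: "cinf_hom CinfR CinfR_ops A \<Phi> v" and g: "g \<in> CinfR"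
  shows "v g = \<Phi> 1 (\<lambda>x. g (x 0)) (\<lambda>_. v (\<lambda>t. t))"
proof -
  have "g = CinfR_ops 1 (\<lambda>x. g (x 0)) (\<lambda>_. (\<lambda>t. t))" by (simp add: CinfR_ops_def)
  then have "v g = v (CinfR_ops 1 (\<lambda>x. g (x 0)) (\<lambda>_. (\<lambda>t. t)))" by simp
  also have "\<dots> = \<Phi> 1 (\<lambda>x. g (x 0)) (\<lambda>i. v (\<lambda>t. t))"
    by (rule hom_ops[OF vh]) (use g id_CinfR in \<open>auto simp: CinfR_def\<close>)
  finally show ?thesis .
qed

lemma point_eval:
  assumes R: "cinf_ring A \<Phi>" and p: "is_point A \<Phi> p" and vh: "cinf_hom CinfR CinfR_ops A \<Phi> v" and g: "g \<in> CinfR"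
  shows "p (v g) = g (p (v (\<lambda>t. t)))"
proof -
  have vid: "v (\<lambda>t. t) \<in> A" by (rule hom_closed[OF vh id_CinfR])
  have "p (v g) = p (\<Phi> 1 (\<lambda>x. g (x 0)) (\<lambda>_. v (\<lambda>t. t)))" by (simp add: v_eval[OF vh g])
  also have "\<dots> = real_ops 1 (\<lambda>x. g (x 0)) (\<lambda>i. p (v (\<lambda>t. t)))"
    by (rule hom_ops[OF p[unfolded is_point_def]]) (use g vid in \<open>auto simp: CinfR_def\<close>)
  finally show ?thesis by (simp add: real_ops_def)
qed

theorem corollary5p4:
  fixes A :: "'a set" and \<Phi> :: "'a cops" and v :: "(real \<Rightarrow> real) \<Rightarrow> 'a"
  assumes "in_CW A \<Phi>"
    and "cinf_hom CinfR CinfR_ops A \<Phi> v"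
  shows "(\<exists>u. cinf_hom CinfH CinfH_ops A \<Phi> u \<and> (\<forall>g\<in>CinfR. v g = u (qH g)))
     \<longleftrightarrow> (\<forall>p. is_point A \<Phi> p \<longrightarrow> p (v (\<lambda>t. t)) \<in> {0..})"
proof -
  note vh = assms(2)
  have R: "cinf_ring A \<Phi>" using assms(1) by (simp add: in_CW_def)
  have WD: "W_determined A \<Phi>" using assms(1) by (simp add: in_CW_def)
  have vid: "v (\<lambda>t. t) \<in> A" by (rule hom_closed[OF vh id_CinfR])
  show ?thesis
  proof
    assume "\<exists>u. cinf_hom CinfH CinfH_ops A \<Phi> u \<and> (\<forall>g\<in>CinfR. v g = u (qH g))"
    then obtain u where u: "\<forall>g\<in>CinfR. v g = u (qH g)" by blast
    show "\<forall>p. is_point A \<Phi> p \<longrightarrow> p (v (\<lambda>t. t)) \<in> {0..}"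
    proof (intro allI impI)
      fix p assume p: "is_point A \<Phi> p"
      show "p (v (\<lambda>t. t)) \<in> {0..}"
      proof (rule ccontr)
        assume "p (v (\<lambda>t. t)) \<notin> {0..}"
        then have neg: "p (v (\<lambda>t. t)) < 0" by simp
        define G where "G s = flat (- s)" for s
        have GC: "G \<in> CinfR" unfolding CinfR_def G_def by (simp, intro smooth_intros) auto
        have ZC: "(\<lambda>_. 0) \<in> CinfR" unfolding CinfR_def by (simp add: smooth_const)
        have "qH G = qH (\<lambda>_. 0)" unfolding qH_def G_def by (auto simp: flat_zero)
        then have "v G = v (\<lambda>_. 0)" using u GC ZC by metis
        then have "p (v G) = p (v (\<lambda>_. 0))" by simp
        then have "G (p (v (\<lambda>t. t))) = 0"
          using point_eval[OF R p vh GC] point_eval[OF R p vh ZC] by simp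
        moreover have "G (p (v (\<lambda>t. t))) > 0" unfolding G_def using neg by (intro flat_pos) simp
        ultimately show False by simp
      qed
    qed
  next
    assume P: "\<forall>p. is_point A \<Phi> p \<longrightarrow> p (v (\<lambda>t. t)) \<in> {0..}"
    have E: "v g = v g'" if g: "g \<in> CinfR" and g': "g' \<in> CinfR" and eq: "\<forall>t\<ge>0. g t = g' t" for g g'
    proof (rule ccontr)
      assume ne: "v g \<noteq> v g'"
      have "v g \<in> A" "v g' \<in> A" using hom_closed[OF vh] g g' by auto
      then obtain W \<Psi> h where Wl: "weil W \<Psi>" and h: "cinf_hom A \<Phi> W \<Psi> h" and hne: "h (v g) \<noteq> h (v g')"
        using WD ne unfolding W_determined_def by blast
      have RW: "cinf_ring W \<Psi>" by (rule weil_ring[OF Wl])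
      define w where "w = h (v (\<lambda>t. t))"
      have wW: "w \<in> W" unfolding w_def by (rule hom_closed[OF h vid])
      have "is_point A \<Phi> (\<lambda>x. rp \<Psi> (h x))" by (rule point_from_weil[OF Wl h])
      then have c0: "rp \<Psi> w \<ge> 0" using P unfolding w_def by auto
      obtain r where nw: "nilp \<Psi> w (rp \<Psi> w) r" using rp_nilp[OF Wl wW] by blast
      have hv: "h (v k) = \<Psi> 1 (\<lambda>x. k (x 0)) (\<lambda>_. w)" if k: "k \<in> CinfR" for k
      proof -
        have "h (v k) = h (\<Phi> 1 (\<lambda>x. k (x 0)) (\<lambda>_. v (\<lambda>t. t)))" by (simp add: v_eval[OF vh k])
        also have "\<dots> = \<Psi> 1 (\<lambda>x. k (x 0)) (\<lambda>i. h (v (\<lambda>t. t)))"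
          by (rule hom_ops[OF h]) (use k vid in \<open>auto simp: CinfR_def\<close>)
        finally show ?thesis by (simp add: w_def)
      qed
      have "\<Psi> 1 (\<lambda>x. g (x 0)) (\<lambda>_. w) = \<Psi> 1 (\<lambda>x. g' (x 0)) (\<lambda>_. w)"
        by (rule agree_half[OF RW wW nw c0]) (use g g' eq in \<open>auto simp: CinfR_iff\<close>)
      then show False using hne hv[OF g] hv[OF g'] by simp
    qed
    define u where "u S = v (SOME g. g \<in> CinfR \<and> S = qH g)" for S
    have uq: "u (qH g) = v g" if g: "g \<in> CinfR" for g
    proof -
      define g0 where "g0 = (SOME k. k \<in> CinfR \<and> qH g = qH k)"
      have "g0 \<in> CinfR \<and> qH g = qH g0" unfolding g0_def by (rule someI[of _ g]) (use g in simp)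
      moreover have "g \<in> qH g" using g by (simp add: qH_def)
      ultimately have "g0 \<in> CinfR" "\<forall>t\<ge>0. g t = g0 t" by (auto simp: qH_def)
      then have "v g0 = v g" using E g by metis
      then show ?thesis unfolding u_def g0_def by simp
    qed
    have uhom: "cinf_hom CinfH CinfH_ops A \<Phi> u"
      unfolding cinf_hom_def
    proof (intro conjI ballI allI impI)
      fix x assume "x \<in> CinfH"
      then obtain g where "g \<in> CinfR" "x = qH g" by (auto simp: CinfH_def)
      then show "u x \<in> A" using uq hom_closed[OF vh] by simp
    next
      fix n f c assume fc: "smooth_fun n f \<and> (\<forall>i<n. c i \<in> CinfH)"
      define Rp where "Rp i = (SOME g. g \<in> CinfR \<and> c i = qH g)" for i
      have Rp: "Rp i \<in> CinfR \<and> c i = qH (Rp i)" if "i < n" for i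
      proof -
        have "\<exists>g. g \<in> CinfR \<and> c i = qH g" using fc that by (auto simp: CinfH_def)
        then show ?thesis unfolding Rp_def by (rule someI_ex)
      qed
      define X where "X = CinfR_ops n f Rp"
      have XC: "X \<in> CinfR"
      proof -
        have "smooth_fun 1 (\<lambda>x. f (\<lambda>i. Rp i (x 0)))"
          by (rule smooth_comp) (use fc Rp in \<open>auto simp: CinfR_def\<close>)
        then show ?thesis by (simp add: CinfR_def X_def CinfR_ops_def)
      qed
      have "Rp = (\<lambda>i. SOME g. g \<in> CinfR \<and> c i = qH g)" by (simp add: Rp_def fun_eq_iff)
      then have "CinfH_ops n f c = qH X" by (simp add: CinfH_ops_def X_def)
      then have "u (CinfH_ops n f c) = v X" using uq[OF XC] by simp
      also have "\<dots> = \<Phi> n f (\<lambda>i. v (Rp i))"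
        unfolding X_def by (rule hom_ops[OF vh]) (use fc Rp in auto)
      also have "\<dots> = \<Phi> n f (\<lambda>i. u (c i))"
        by (rule cr_local[OF R]) (use fc Rp uq in auto)
      finally show "u (CinfH_ops n f c) = \<Phi> n f (\<lambda>i. u (c i))" .
    qed
    show "\<exists>u. cinf_hom CinfH CinfH_ops A \<Phi> u \<and> (\<forall>g\<in>CinfR. v g = u (qH g))"
      using uhom uq by auto
  qed
qed


end
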